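(* Let $\mathcal{X}$ be a finite alphabet and $\mathcal{W}=\{W_x\}_{x\in\mathcal{X}}$ a classical-quantum channel. Let $n,M$ be integers and $r\in(C_0(\mathcal{W}),C(\mathcal{W}))$. Let $\mathcal{T}_n(\mathcal{X})$ be the set of types of alphabet $\mathcal{X}$ and length $n$, and $\gamma_n=\frac12(n+1)^{-|\mathcal{X}|}$. Then \[ \varepsilon^{\rm NS}\big(M,\mathcal{W}^{\otimes n}\otimes\mathcal{I}_2\big)\ge\inf_{T\in\mathcal{T}_n(\mathcal{X})}\sup_{\sigma\in\mathcal{S}(\mathcal{H}),\,s\ge0}\Big\{\gamma_n\,\mathrm{Tr}\big[W_T^{\otimes n}\wedge Ms\,\sigma^{\otimes n}\big]-s\Big\}, \] where $W_T^{\otimes n}=\bigotimes_{x\in\mathcal{X}}W_x^{\otimes nT_x}$.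
   Context: $\mathcal{H}$ finite-dimensional Hilbert space, $\mathcal{S}(\mathcal{H})$ its density operators. A classical-quantum channel is $\mathcal{W}=\{W_x\}_{x\in\mathcal{X}}\subset\mathcal{S}(\mathcal{H})$. A type of length $n$ on $\mathcal{X}$ is a distribution $T=(T_x)_{x\in\mathcal{X}}$ with $nT_x\in\mathbb{N}$ for all $x$. For Hermitian $X=\sum_i\lambda_i\Pi_i$: $|X|=\sum_i|\lambda_i|\Pi_i$, and $A\wedge B=\frac12(A+B-|A-B|)$. For $M>0$: $1-\varepsilon^{\rm NS}(M,\mathcal{W})=\sup\{\frac1M\sum_x\mathrm{Tr}[\Lambda_xW_x]:\sum_x\Lambda_x=\mathbb{I},\ 0\preccurlyeq\Lambda_x\preccurlyeq p(x)\mathbb{I},\ p(x)\ge0,\ \sum_xp(x)=M\}$. $\mathcal{W}^{\otimes n}$ has alphabet $\mathcal{X}^n$ and outputs $W_{x_1}\otimes\cdots\otimes W_{x_n}$; $\mathcal{I}_2$ is the cq channel on $\{1,2\}$ with outputs $|i\rangle\langle i|$; $\mathcal{W}\otimes\mathcal{I}_2$ has alphabet $\mathcal{X}\times\{1,2\}$ and outputs $W_x\otimes|i\rangle\langle i|$. With the Petz Rényi divergence $D_\alpha(\rho\|\sigma)=\frac1{\alpha-1}\log\mathrm{Tr}[\rho^\alpha\sigma^{1-\alpha}]$ ($\alpha\in(0,1)$), $D_1$ the Umegaki relative entropy and $D_0(\rho\|\sigma)=-\log\mathrm{Tr}[\rho^0\sigma]$ ($\rho^0$ the support projection), $C_\alpha(\mathcal{W})=\sup_{p\in\mathcal{P}(\mathcal{X})}\inf_{\sigma}\sum_xp(x)D_\alpha(W_x\|\sigma)$,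 $C(\mathcal{W})=C_1(\mathcal{W})$. *)

theory Defs
  imports "Jordan_Normal_Form.Schur_Decomposition" "HOL-Library.Extended_Real"
begin

definition mtrace :: "complex mat \<Rightarrow> complex" where
  "mtrace A = (\<Sum>i<dim_row A. A $$ (i, i))"

definition hermitian_mat :: "nat \<Rightarrow> complex mat \<Rightarrow> bool" where
  "hermitian_mat d A \<longleftrightarrow> A \<in> carrier_mat d d \<and> mat_adjoint A = A"

definition psd_mat :: "nat \<Rightarrow> complex mat \<Rightarrow> bool" where
  "psd_mat d A \<longleftrightarrow> hermitian_mat d A \<and>
     (\<forall>v \<in> carrier_vec d. Re (((A *\<^sub>v v) \<bullet>c v)) \<ge> 0 \<and> Im (((A *\<^sub>v v) \<bullet>c v)) = 0)"

definition loewner_le :: "nat \<Rightarrow> complex mat \<Rightarrow> complex mat \<Rightarrow> bool" where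
  "loewner_le d A B \<longleftrightarrow> hermitian_mat d A \<and> hermitian_mat d B \<and> psd_mat d (B - A)"

definition density_ops :: "nat \<Rightarrow> complex mat set" where
  "density_ops d = {\<rho>. psd_mat d \<rho> \<and> mtrace \<rho> = 1}"

definition unitary_mat :: "nat \<Rightarrow> complex mat \<Rightarrow> bool" where
  "unitary_mat d U \<longleftrightarrow> U \<in> carrier_mat d d \<and> U * mat_adjoint U = 1\<^sub>m d \<and> mat_adjoint U * U = 1\<^sub>m d"

definition real_diag_mat :: "nat \<Rightarrow> (nat \<Rightarrow> real) \<Rightarrow> complex mat" where
  "real_diag_mat d l = mat d d (\<lambda>(i,j). if i = j then complex_of_real (l i) else 0)"

text \<open>Functional calculus via the spectral decomposition X = U diag(l) U^*:
  f(X) = U diag(f l) U^*. (Meaningful for Hermitian X.)\<close>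
definition mat_fun :: "nat \<Rightarrow> (real \<Rightarrow> real) \<Rightarrow> complex mat \<Rightarrow> complex mat" where
  "mat_fun d f X = (SOME Y. \<exists>U l. unitary_mat d U \<and> X = U * real_diag_mat d l * mat_adjoint U
                                   \<and> Y = U * real_diag_mat d (f \<circ> l) * mat_adjoint U)"

definition mat_abs :: "nat \<Rightarrow> complex mat \<Rightarrow> complex mat" where
  "mat_abs d X = mat_fun d abs X"

definition mat_wedge :: "nat \<Rightarrow> complex mat \<Rightarrow> complex mat \<Rightarrow> complex mat" where
  "mat_wedge d A B = (1/2 :: complex) \<cdot>\<^sub>m (A + B - mat_abs d (A - B))"

definition kron :: "complex mat \<Rightarrow> complex mat \<Rightarrow> complex mat" where
  "kron A B = mat (dim_row A * dim_row B) (dim_col A * dim_col B)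
     (\<lambda>(i,j). A $$ (i div dim_row B, j div dim_col B) * B $$ (i mod dim_row B, j mod dim_col B))"

fun kron_list :: "complex mat list \<Rightarrow> complex mat" where
  "kron_list [] = 1\<^sub>m 1"
| "kron_list (A # As) = kron A (kron_list As)"

text \<open>|i><i| on C^2, for i \<in> {0,1} (playing the role of {1,2}).\<close>
definition ket_bra2 :: "nat \<Rightarrow> complex mat" where
  "ket_bra2 i = mat 2 2 (\<lambda>(j,k). if j = i \<and> k = i then 1 else 0)"

text \<open>Powers rho^a for a > 0 via the functional calculus (0^a = 0);
  support projection rho^0.\<close>
definition mat_pow :: "nat \<Rightarrow> complex mat \<Rightarrow> real \<Rightarrow> complex mat" where
  "mat_pow d \<rho> a = mat_fun d (\<lambda>t. t powr a) \<rho>"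

definition supp_proj :: "nat \<Rightarrow> complex mat \<Rightarrow> complex mat" where
  "supp_proj d \<rho> = mat_fun d (\<lambda>t. if t = 0 then 0 else 1) \<rho>"

text \<open>Logarithm on the support (0 log 0 = 0 convention).\<close>
definition mat_log :: "nat \<Rightarrow> complex mat \<Rightarrow> complex mat" where
  "mat_log d \<rho> = mat_fun d (\<lambda>t. if t = 0 then 0 else ln t) \<rho>"

definition D_zero :: "nat \<Rightarrow> complex mat \<Rightarrow> complex mat \<Rightarrow> ereal" where
  "D_zero d \<rho> \<sigma> = (let t = Re (mtrace (supp_proj d \<rho> * \<sigma>)) in
     if t \<le> 0 then \<infinity> else ereal (- ln t))"

definition D_petz :: "nat \<Rightarrow> real \<Rightarrow> complex mat \<Rightarrow> complex mat \<Rightarrow> ereal" where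
  "D_petz d \<alpha> \<rho> \<sigma> = (let t = Re (mtrace (mat_pow d \<rho> \<alpha> * mat_pow d \<sigma> (1 - \<alpha>))) in
     if t \<le> 0 then \<infinity> else ereal (ln t / (\<alpha> - 1)))"

text \<open>Umegaki relative entropy; +\<infinity> unless supp rho \<subseteq> supp sigma.\<close>
definition D_umegaki :: "nat \<Rightarrow> complex mat \<Rightarrow> complex mat \<Rightarrow> ereal" where
  "D_umegaki d \<rho> \<sigma> =
     (if \<forall>v \<in> carrier_vec d. \<sigma> *\<^sub>v v = 0\<^sub>v d \<longrightarrow> \<rho> *\<^sub>v v = 0\<^sub>v d
      then ereal (Re (mtrace (\<rho> * (mat_log d \<rho> - mat_log d \<sigma>)))) else \<infinity>)"

definition D_alpha :: "nat \<Rightarrow> real \<Rightarrow> complex mat \<Rightarrow> complex mat \<Rightarrow> ereal" where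
  "D_alpha d \<alpha> \<rho> \<sigma> = (if \<alpha> = 0 then D_zero d \<rho> \<sigma>
                         else if \<alpha> = 1 then D_umegaki d \<rho> \<sigma> else D_petz d \<alpha> \<rho> \<sigma>)"

definition prob_dists :: "('x::finite \<Rightarrow> real) set" where
  "prob_dists = {p. (\<forall>x. p x \<ge> 0) \<and> (\<Sum>x\<in>UNIV. p x) = 1}"

definition cq_capacity :: "nat \<Rightarrow> real \<Rightarrow> ('x::finite \<Rightarrow> complex mat) \<Rightarrow> ereal" where
  "cq_capacity d \<alpha> W = (SUP p \<in> prob_dists. INF \<sigma> \<in> density_ops d.
       (\<Sum>x\<in>UNIV. ereal (p x) * D_alpha d \<alpha> (W x) \<sigma>))"

definition eps_NS :: "real \<Rightarrow> 'a set \<Rightarrow> ('a \<Rightarrow> complex mat) \<Rightarrow> nat \<Rightarrow> real" where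
  "eps_NS M A W D = 1 - Sup {(1 / M) * (\<Sum>x\<in>A. Re (mtrace (\<Lambda> x * W x))) | \<Lambda> p.
       mat D D (\<lambda>ij. \<Sum>x\<in>A. \<Lambda> x $$ ij) = 1\<^sub>m D \<and>
       (\<forall>x\<in>A. p x \<ge> 0 \<and> loewner_le D (0\<^sub>m D D) (\<Lambda> x)
               \<and> loewner_le D (\<Lambda> x) (complex_of_real (p x) \<cdot>\<^sub>m 1\<^sub>m D)) \<and>
       (\<Sum>x\<in>A. p x) = M}"

definition is_cq_channel :: "nat \<Rightarrow> ('x \<Rightarrow> complex mat) \<Rightarrow> bool" where
  "is_cq_channel d W \<longleftrightarrow> (\<forall>x. W x \<in> density_ops d)"

text \<open>Outputs of W^{\<otimes>n} \<otimes> I_2 on the alphabet X^n \<times> {1,2} (here lists of length n times {0,1}).\<close>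
definition tensor_channel_I2 :: "('x \<Rightarrow> complex mat) \<Rightarrow> 'x list \<times> nat \<Rightarrow> complex mat" where
  "tensor_channel_I2 W = (\<lambda>(xs, i). kron (kron_list (map W xs)) (ket_bra2 i))"

definition types_n :: "nat \<Rightarrow> ('x::finite \<Rightarrow> real) set" where
  "types_n n = {T. T \<in> prob_dists \<and> (\<forall>x. \<exists>k::nat. real n * T x = real k)}"

text \<open>W_T^{\<otimes>n} = \<Otimes>_x W_x^{\<otimes> n T_x}, with factors in some order determined by a
  sequence of length n having n T_x occurrences of each x.\<close>
definition W_type_tensor :: "nat \<Rightarrow> ('x::finite \<Rightarrow> complex mat) \<Rightarrow> ('x \<Rightarrow> real) \<Rightarrow> complex mat" where
  "W_type_tensor n W T = kron_list (map W (SOME xs. length xs = n \<and>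
       (\<forall>x. real (count_list xs x) = real n * T x)))"

end

theory Submission
  imports Defs "HOL-Combinatorics.List_Permutation"
begin

lemma adj_dim[simp]: "dim_row (mat_adjoint A) = dim_col A" "dim_col (mat_adjoint A) = dim_row A"
  unfolding mat_adjoint_def by (auto simp: mat_of_rows_def)
lemma adj_index[simp]: "i < dim_col A \<Longrightarrow> j < dim_row A \<Longrightarrow> mat_adjoint A $$ (i,j) = cnj (A $$ (j,i))"
  unfolding mat_adjoint_def mat_of_rows_def by simp
lemma adj_carrier[simp]: "A \<in> carrier_mat n m \<Longrightarrow> mat_adjoint A \<in> carrier_mat m n"
  unfolding carrier_mat_def by simp
lemma rdiag_index[simp]: "i < d \<Longrightarrow> j < d \<Longrightarrow> real_diag_mat d l $$ (i,j) = (if i = j then complex_of_real (l i) else 0)"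
  "dim_row (real_diag_mat d l) = d" "dim_col (real_diag_mat d l) = d"
  unfolding real_diag_mat_def by simp_all

lemma mult_entry: "A \<in> carrier_mat n m \<Longrightarrow> B \<in> carrier_mat m k \<Longrightarrow> i < n \<Longrightarrow> j < k \<Longrightarrow>
   (A * B) $$ (i,j) = (\<Sum>q<m. A $$ (i,q) * B $$ (q,j))"
  unfolding carrier_mat_def by (simp add: scalar_prod_def atLeast0LessThan)

lemma udu_entry:
  assumes U: "U \<in> carrier_mat N N" and i: "i < N" and j: "j < N"
  shows "(U * real_diag_mat N l * mat_adjoint U) $$ (i,j) = (\<Sum>k<N. U $$ (i,k) * complex_of_real (l k) * cnj (U $$ (j,k)))"
proof -
  have D: "real_diag_mat N l \<in> carrier_mat N N" by (rule carrier_matI) simp_all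
  have UD: "U * real_diag_mat N l \<in> carrier_mat N N" using U D by simp
  have "(U * real_diag_mat N l * mat_adjoint U) $$ (i,j) = (\<Sum>k<N. (U * real_diag_mat N l) $$ (i,k) * mat_adjoint U $$ (k,j))"
    by (rule mult_entry[OF UD adj_carrier[OF U] i j])
  also have "\<dots> = (\<Sum>k<N. U $$ (i,k) * complex_of_real (l k) * cnj (U $$ (j,k)))"
  proof (rule sum.cong[OF refl])
    fix k assume k: "k \<in> {..<N}"
    have "(U * real_diag_mat N l) $$ (i,k) = (\<Sum>q<N. U $$ (i,q) * real_diag_mat N l $$ (q,k))"
      using mult_entry[OF U D i] k by simp
    also have "\<dots> = (\<Sum>q<N. if q = k then U $$ (i,k) * complex_of_real (l k) else 0)"
      using k by (intro sum.cong) auto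
    also have "\<dots> = U $$ (i,k) * complex_of_real (l k)" using k by simp
    finally show "(U * real_diag_mat N l) $$ (i,k) * mat_adjoint U $$ (k,j) = U $$ (i,k) * complex_of_real (l k) * cnj (U $$ (j,k))"
      using U j k by simp
  qed
  finally show ?thesis .
qed

lemma adj_mult:
  fixes A B :: "complex mat"
  assumes A: "A \<in> carrier_mat n m" and B: "B \<in> carrier_mat m k"
  shows "mat_adjoint (A * B) = mat_adjoint B * mat_adjoint A"
proof (rule eq_matI)
  show "dim_row (mat_adjoint (A * B)) = dim_row (mat_adjoint B * mat_adjoint A)" using A B by simp
  show "dim_col (mat_adjoint (A * B)) = dim_col (mat_adjoint B * mat_adjoint A)" using A B by simp
  fix i j assume i: "i < dim_row (mat_adjoint B * mat_adjoint A)" and j: "j < dim_col (mat_adjoint B * mat_adjoint A)"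
  hence i': "i < k" and j': "j < n" using A B by auto
  have "mat_adjoint (A * B) $$ (i,j) = cnj ((A*B) $$ (j,i))" using i' j' A B by simp
  also have "\<dots> = cnj (\<Sum>q<m. A $$ (j,q) * B $$ (q,i))" using mult_entry[OF A B j' i'] by simp
  also have "\<dots> = (\<Sum>q<m. mat_adjoint B $$ (i,q) * mat_adjoint A $$ (q,j))"
    using A B i' j' by (simp add: mult.commute)
  also have "\<dots> = (mat_adjoint B * mat_adjoint A) $$ (i,j)"
    using mult_entry[OF adj_carrier[OF B] adj_carrier[OF A] i' j'] by simp
  finally show "mat_adjoint (A * B) $$ (i,j) = (mat_adjoint B * mat_adjoint A) $$ (i,j)" .
qed

lemma adj_adj: "(A::complex mat) \<in> carrier_mat n m \<Longrightarrow> mat_adjoint (mat_adjoint A) = A"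
  by (rule eq_matI) (simp_all add: carrier_matD)

lemma unitary_carrier: "unitary_mat N U \<Longrightarrow> U \<in> carrier_mat N N"
  unfolding unitary_mat_def by simp

lemma unitary_cols:
  assumes "unitary_mat N U" "i < N" "j < N"
  shows "(\<Sum>k<N. cnj (U $$ (k,i)) * U $$ (k,j)) = (if i = j then 1 else 0)"
proof -
  have U: "U \<in> carrier_mat N N" and e: "mat_adjoint U * U = 1\<^sub>m N" using assms unfolding unitary_mat_def by auto
  have "(mat_adjoint U * U) $$ (i,j) = (\<Sum>k<N. cnj (U $$ (k,i)) * U $$ (k,j))"
    using mult_entry[OF adj_carrier[OF U] U assms(2,3)] U assms by simp
  thus ?thesis using e assms by simp
qed

lemma unitary_rows:
  assumes "unitary_mat N U" "i < N" "j < N"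
  shows "(\<Sum>k<N. U $$ (i,k) * cnj (U $$ (j,k))) = (if i = j then 1 else 0)"
proof -
  have U: "U \<in> carrier_mat N N" and e: "U * mat_adjoint U = 1\<^sub>m N" using assms unfolding unitary_mat_def by auto
  have "(U * mat_adjoint U) $$ (i,j) = (\<Sum>k<N. U $$ (i,k) * cnj (U $$ (j,k)))"
    using mult_entry[OF U adj_carrier[OF U] assms(2,3)] U assms by simp
  thus ?thesis using e assms by simp
qed

lemma unitaryI_cols:
  assumes U: "U \<in> carrier_mat N N"
    and c: "\<And>i j. i < N \<Longrightarrow> j < N \<Longrightarrow> (\<Sum>k<N. cnj (U $$ (k,i)) * U $$ (k,j)) = (if i = j then 1 else 0)"
  shows "unitary_mat N U"
proof -
  have e: "mat_adjoint U * U = 1\<^sub>m N"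
  proof (rule eq_matI)
    fix i j assume "i < dim_row (1\<^sub>m N)" "j < dim_col (1\<^sub>m N)"
    hence i: "i < N" and j: "j < N" by auto
    show "(mat_adjoint U * U) $$ (i,j) = 1\<^sub>m N $$ (i,j)"
      using mult_entry[OF adj_carrier[OF U] U i j] U i j c[OF i j] by simp
  qed (use U in auto)
  have "U * mat_adjoint U = 1\<^sub>m N"
    by (rule mat_mult_left_right_inverse[OF adj_carrier[OF U] U e])
  thus ?thesis using e U unfolding unitary_mat_def by simp
qed

lemma unitary_mult:
  assumes U: "unitary_mat N U" and V: "unitary_mat N V"
  shows "unitary_mat N (U * V)"
proof -
  have Uc: "U \<in> carrier_mat N N" and Vc: "V \<in> carrier_mat N N" using U V unitary_carrier by auto
  have Ua: "mat_adjoint U \<in> carrier_mat N N" and Va: "mat_adjoint V \<in> carrier_mat N N" using Uc Vc by auto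
  have "mat_adjoint (U * V) * (U * V) = mat_adjoint V * mat_adjoint U * (U * V)"
    using Uc Vc by (simp add: adj_mult)
  also have "\<dots> = mat_adjoint V * (mat_adjoint U * (U * V))"
    by (rule assoc_mult_mat[OF Va Ua mult_carrier_mat[OF Uc Vc]])
  also have "mat_adjoint U * (U * V) = (mat_adjoint U * U) * V"
    by (rule assoc_mult_mat[OF Ua Uc Vc, symmetric])
  also have "mat_adjoint U * U = 1\<^sub>m N" using U unfolding unitary_mat_def by simp
  also have "1\<^sub>m N * V = V" using Vc by simp
  also have "mat_adjoint V * V = 1\<^sub>m N" using V unfolding unitary_mat_def by simp
  finally have e: "mat_adjoint (U * V) * (U * V) = 1\<^sub>m N" .
  have "(U * V) * mat_adjoint (U * V) = 1\<^sub>m N"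
    by (rule mat_mult_left_right_inverse[OF _ _ e]) (use Uc Vc in auto)
  thus ?thesis using e Uc Vc unfolding unitary_mat_def by simp
qed

lemma real_of_selfconj: "z = cnj z \<Longrightarrow> complex_of_real (Re z) = z"
  by (simp add: complex_eq_iff)

lemma mult_carrier_sq: "A \<in> carrier_mat N N \<Longrightarrow> B \<in> carrier_mat N N \<Longrightarrow> A * B \<in> carrier_mat N N"
  by (rule mult_carrier_mat)

lemma spectral:
  fixes A :: "complex mat"
  assumes "A \<in> carrier_mat N N" "mat_adjoint A = A"
  shows "\<exists>U l. unitary_mat N U \<and> A = U * real_diag_mat N l * mat_adjoint U"
  using assms
proof (induction N arbitrary: A)
  case 0
  have u: "unitary_mat 0 (1\<^sub>m 0)" unfolding unitary_mat_def
    by (auto intro!: eq_matI)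
  have "A = 1\<^sub>m 0 * real_diag_mat 0 (\<lambda>_. 0) * mat_adjoint (1\<^sub>m 0)"
    by (rule eq_matI) (use 0 in \<open>simp_all add: carrier_matD\<close>)
  thus ?case using u by blast
next
  case (Suc m A)
  define N where "N = Suc m"
  have A: "A \<in> carrier_mat N N" and Ah: "mat_adjoint A = A" using Suc.prems N_def by auto
  obtain as where cp: "char_poly A = (\<Prod>a\<leftarrow>as. [:- a, 1:])" and len: "length as = N"
    using char_poly_factorized[OF A] by blast
  then obtain e as' where asd: "as = e # as'" unfolding N_def by (cases as) auto
  have "poly (char_poly A) e = 0" using cp asd by simp
  hence "eigenvalue A e" using eigenvalue_root_char_poly[OF A] by simp
  then obtain v where ev: "eigenvector A v e" unfolding eigenvalue_def by blast
  hence v: "v \<in> carrier_vec N" and v0: "v \<noteq> 0\<^sub>v N" and eig: "A *\<^sub>v v = e \<cdot>\<^sub>v v"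
    unfolding eigenvector_def using A by auto
  interpret cof_vec_space N "TYPE(complex)" .
  define b where "b = basis_completion v"
  define ws where "ws = gram_schmidt N b"
  from basis_completion[OF v v0, folded b_def]
  have dist_b: "distinct b" and indep: "\<not> lin_dep (set b)" and b: "set b \<subseteq> carrier_vec N" and hdb: "hd b = v"
    and len_b: "length b = N" by auto
  from hdb len_b obtain vs where bv: "b = v # vs" unfolding N_def by (cases b, auto)
  from gram_schmidt_result[OF b dist_b indep refl, folded ws_def]
  have ws: "set ws \<subseteq> carrier_vec N" "corthogonal ws" "length ws = N"
    by (auto simp: len_b)
  from gram_schmidt_hd[OF v, of vs, folded bv] have hdws: "hd ws = v" unfolding ws_def .
  have ws0: "ws ! 0 = v" using hdws ws(3) unfolding N_def by (cases ws) auto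
  have wsc: "\<And>j. j < N \<Longrightarrow> ws ! j \<in> carrier_vec N" using ws by auto
  define nr where "nr j = sqrt (\<Sum>i<N. (cmod ((ws!j)$i))^2)" for j
  have cdot: "(ws!j) \<bullet>c (ws!i) = (\<Sum>k<N. (ws!j)$k * cnj ((ws!i)$k))" if "i < N" "j < N" for i j
    using wsc[OF that(1)] wsc[OF that(2)] by (simp add: scalar_prod_def atLeast0LessThan)
  have nrsq: "(ws!j) \<bullet>c (ws!j) = complex_of_real ((nr j)^2)" if "j < N" for j
  proof -
    have "(ws!j) \<bullet>c (ws!j) = (\<Sum>k<N. complex_of_real ((cmod ((ws!j)$k))^2))"
      unfolding cdot[OF that that] by (intro sum.cong refl) (rule complex_norm_square[symmetric])
    also have "\<dots> = complex_of_real (\<Sum>k<N. (cmod ((ws!j)$k))^2)" by simp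
    also have "(\<Sum>k<N. (cmod ((ws!j)$k))^2) = (nr j)^2" unfolding nr_def
      by (simp add: sum_nonneg)
    finally show ?thesis .
  qed
  have nrpos: "nr j \<noteq> 0" if "j < N" for j
  proof
    assume "nr j = 0"
    hence "(ws!j) \<bullet>c (ws!j) = 0" using nrsq[OF that] by simp
    thus False using ws(2) ws(3) that unfolding corthogonal_def by auto
  qed
  define W where "W = mat N N (\<lambda>(i,j). (ws!j)$i / complex_of_real (nr j))"
  have Wc: "W \<in> carrier_mat N N" unfolding W_def by simp
  have Wi: "W $$ (i,j) = (ws!j)$i / complex_of_real (nr j)" if "i < N" "j < N" for i j
    unfolding W_def using that by simp
  have Wu: "unitary_mat N W"
  proof (rule unitaryI_cols[OF Wc])
    fix i j assume i: "i < N" and j: "j < N"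
    have "(\<Sum>k<N. cnj (W $$ (k,i)) * W $$ (k,j)) = (\<Sum>k<N. (ws!j)$k * cnj ((ws!i)$k)) / (complex_of_real (nr i) * complex_of_real (nr j))"
      unfolding sum_divide_distrib by (intro sum.cong refl) (simp add: Wi i j field_simps)
    also have "\<dots> = (if i = j then 1 else 0)"
    proof (cases "i = j")
      case True
      thus ?thesis using nrsq[OF j] nrpos[OF j] cdot[OF j j]
        by (simp add: power2_eq_square)
    next
      case False
      hence "(ws!j) \<bullet>c (ws!i) = 0" using ws(2) ws(3) i j unfolding corthogonal_def by auto
      thus ?thesis using cdot[OF i j] False by simp
    qed
    finally show "(\<Sum>k<N. cnj (W $$ (k,i)) * W $$ (k,j)) = (if i = j then 1 else 0)" .
  qed
  have N0: "0 < N" unfolding N_def by simp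
  have AW0: "(A * W) $$ (k,0) = e * W $$ (k,0)" if k: "k < N" for k
  proof -
    have "(A * W) $$ (k,0) = (\<Sum>q<N. A $$ (k,q) * v$q) / complex_of_real (nr 0)"
      unfolding mult_entry[OF A Wc k N0] sum_divide_distrib
      by (intro sum.cong refl) (simp add: Wi N0 ws0)
    also have "(\<Sum>q<N. A $$ (k,q) * v$q) = (A *\<^sub>v v) $ k"
      using A v k by (simp add: scalar_prod_def atLeast0LessThan)
    also have "\<dots> = e * v $ k" using eig v k by simp
    finally show ?thesis using Wi[OF k N0] ws0 by simp
  qed
  define A' where "A' = mat_adjoint W * A * W"
  have Wa: "mat_adjoint W \<in> carrier_mat N N" using Wc by simp
  have A'c: "A' \<in> carrier_mat N N" unfolding A'_def by (rule mult_carrier_mat[OF mult_carrier_mat[OF Wa A] Wc])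
  have A'alt: "A' = mat_adjoint W * (A * W)" unfolding A'_def
    by (rule assoc_mult_mat[OF Wa A Wc])
  have A'col0: "A' $$ (i,0) = (if i = 0 then e else 0)" if i: "i < N" for i
  proof -
    have "A' $$ (i,0) = (\<Sum>k<N. cnj (W $$ (k,i)) * (e * W $$ (k,0)))"
      unfolding A'alt mult_entry[OF Wa mult_carrier_mat[OF A Wc] i N0]
      by (intro sum.cong refl) (simp add: AW0 i Wc[THEN carrier_matD(1)] Wc[THEN carrier_matD(2)])
    also have "\<dots> = e * (\<Sum>k<N. cnj (W $$ (k,i)) * W $$ (k,0))"
      by (simp add: sum_distrib_left mult.left_commute)
    also have "\<dots> = (if i = 0 then e else 0)" using unitary_cols[OF Wu i N0] by simp
    finally show ?thesis .
  qed
  have A'h: "mat_adjoint A' = A'"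
  proof -
    have "mat_adjoint A' = mat_adjoint W * mat_adjoint (mat_adjoint W * A)"
      unfolding A'_def by (rule adj_mult[OF mult_carrier_mat[OF Wa A] Wc])
    also have "mat_adjoint (mat_adjoint W * A) = mat_adjoint A * mat_adjoint (mat_adjoint W)"
      by (rule adj_mult[OF Wa A])
    also have "mat_adjoint (mat_adjoint W) = W" by (rule adj_adj[OF Wc])
    also have "mat_adjoint W * (mat_adjoint A * W) = A'"
      unfolding A'_def Ah by (rule assoc_mult_mat[OF Wa A Wc, symmetric])
    finally show ?thesis .
  qed
  have A'herm: "A' $$ (i,j) = cnj (A' $$ (j,i))" if "i < N" "j < N" for i j
  proof -
    have "A' $$ (i,j) = mat_adjoint A' $$ (i,j)" using A'h by simp
    also have "\<dots> = cnj (A' $$ (j,i))" using that A'c by (simp add: carrier_matD)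
    finally show ?thesis .
  qed
  define A3 where "A3 = mat m m (\<lambda>(i,j). A' $$ (Suc i, Suc j))"
  have A3c: "A3 \<in> carrier_mat m m" unfolding A3_def by simp
  have A3h: "mat_adjoint A3 = A3"
  proof (rule eq_matI)
    fix i j assume "i < dim_row A3" "j < dim_col A3"
    hence i: "i < m" and j: "j < m" unfolding A3_def by auto
    show "mat_adjoint A3 $$ (i,j) = A3 $$ (i,j)"
      using i j A'herm[of "Suc i" "Suc j"] unfolding A3_def N_def by simp
  qed (simp_all add: A3_def)
  obtain U3 l3 where U3: "unitary_mat m U3" and A3d: "A3 = U3 * real_diag_mat m l3 * mat_adjoint U3"
    using Suc.IH[OF A3c A3h] by blast
  have U3c: "U3 \<in> carrier_mat m m" using U3 by (rule unitary_carrier)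
  define F where "F = mat N N (\<lambda>(i,j). if i = 0 then (if j = 0 then 1 else 0) else (if j = 0 then 0 else U3 $$ (i - 1, j - 1)))"
  have Fc: "F \<in> carrier_mat N N" unfolding F_def by simp
  have F00: "F $$ (0,0) = 1" unfolding F_def using N0 by simp
  have F0S: "F $$ (0, Suc j) = 0" "F $$ (Suc j, 0) = 0" if "j < m" for j
    unfolding F_def using that N_def by auto
  have FSS: "F $$ (Suc i, Suc j) = U3 $$ (i,j)" if "i < m" "j < m" for i j
    unfolding F_def using that N_def by auto
  have Fu: "unitary_mat N F"
  proof (rule unitaryI_cols[OF Fc])
    fix i j assume i: "i < N" and j: "j < N"
    have s: "(\<Sum>k<N. cnj (F $$ (k,i)) * F $$ (k,j)) = cnj (F $$ (0,i)) * F $$ (0,j) + (\<Sum>k<m. cnj (F $$ (Suc k,i)) * F $$ (Suc k,j))"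
      unfolding N_def by (rule sum.lessThan_Suc_shift)
    show "(\<Sum>k<N. cnj (F $$ (k,i)) * F $$ (k,j)) = (if i = j then 1 else 0)"
    proof (cases i)
      case 0
      show ?thesis
      proof (cases j)
        case 0 thus ?thesis using s \<open>i = 0\<close> F00 F0S by simp
      next
        case (Suc j') thus ?thesis using s \<open>i = 0\<close> F00 F0S j unfolding N_def by simp
      qed
    next
      case (Suc i')
      show ?thesis
      proof (cases j)
        case 0 thus ?thesis using s \<open>i = Suc i'\<close> F00 F0S i unfolding N_def by simp
      next
        case (Suc j')
        have "(\<Sum>k<m. cnj (F $$ (Suc k,i)) * F $$ (Suc k,j)) = (\<Sum>k<m. cnj (U3 $$ (k,i')) * U3 $$ (k,j'))"
          using \<open>i = Suc i'\<close> \<open>j = Suc j'\<close> i j FSS unfolding N_def by (intro sum.cong refl) simp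
        also have "\<dots> = (if i' = j' then 1 else 0)" using unitary_cols[OF U3] i j \<open>i = Suc i'\<close> \<open>j = Suc j'\<close>
          unfolding N_def by simp
        finally show ?thesis using s \<open>i = Suc i'\<close> \<open>j = Suc j'\<close> F0S i j unfolding N_def by simp
      qed
    qed
  qed
  define l where "l i = (if i = 0 then Re (A' $$ (0,0)) else l3 (i - 1))" for i
  have FDF: "F * real_diag_mat N l * mat_adjoint F = A'"
  proof (rule eq_matI)
    fix i j assume "i < dim_row A'" "j < dim_col A'"
    hence i: "i < N" and j: "j < N" using A'c by auto
    have s: "(F * real_diag_mat N l * mat_adjoint F) $$ (i,j) = F $$ (i,0) * complex_of_real (l 0) * cnj (F $$ (j,0))
       + (\<Sum>k<m. F $$ (i,Suc k) * complex_of_real (l3 k) * cnj (F $$ (j,Suc k)))"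
    proof -
      have "(F * real_diag_mat N l * mat_adjoint F) $$ (i,j) = (\<Sum>k<N. F $$ (i,k) * complex_of_real (l k) * cnj (F $$ (j,k)))"
        by (rule udu_entry[OF Fc i j])
      also have "\<dots> = F $$ (i,0) * complex_of_real (l 0) * cnj (F $$ (j,0))
       + (\<Sum>k<m. F $$ (i,Suc k) * complex_of_real (l (Suc k)) * cnj (F $$ (j,Suc k)))"
        unfolding N_def by (rule sum.lessThan_Suc_shift)
      finally show ?thesis by (simp add: l_def)
    qed
    show "(F * real_diag_mat N l * mat_adjoint F) $$ (i,j) = A' $$ (i,j)"
    proof (cases i)
      case 0
      show ?thesis
      proof (cases j)
        case 0 thus ?thesis using s \<open>i = 0\<close> F00 F0S real_of_selfconj[OF A'herm[OF N0 N0]] by (simp add: l_def)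
      next
        case (Suc j')
        have "A' $$ (i,j) = 0" using A'herm[OF i j] A'col0[OF j] \<open>j = Suc j'\<close> \<open>i = 0\<close> by simp
        thus ?thesis using s \<open>i = 0\<close> \<open>j = Suc j'\<close> F00 F0S j unfolding N_def by simp
      qed
    next
      case (Suc i')
      show ?thesis
      proof (cases j)
        case 0 thus ?thesis using s \<open>i = Suc i'\<close> F00 F0S i A'col0[OF i] unfolding N_def by simp
      next
        case (Suc j')
        have "(\<Sum>k<m. F $$ (i,Suc k) * complex_of_real (l3 k) * cnj (F $$ (j,Suc k))) =
              (\<Sum>k<m. U3 $$ (i',k) * complex_of_real (l3 k) * cnj (U3 $$ (j',k)))"
          using \<open>i = Suc i'\<close> \<open>j = Suc j'\<close> i j FSS unfolding N_def by (intro sum.cong refl) simp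
        also have "\<dots> = A3 $$ (i',j')" unfolding A3d using udu_entry[OF U3c] i j \<open>i = Suc i'\<close> \<open>j = Suc j'\<close>
          unfolding N_def by simp
        also have "\<dots> = A' $$ (i,j)" unfolding A3_def using i j \<open>i = Suc i'\<close> \<open>j = Suc j'\<close> unfolding N_def by simp
        finally show ?thesis using s \<open>i = Suc i'\<close> \<open>j = Suc j'\<close> F0S i j unfolding N_def by simp
      qed
    qed
  qed (use A'c Fc in auto)
  define U where "U = W * F"
  have Uu: "unitary_mat N U" unfolding U_def by (rule unitary_mult[OF Wu Fu])
  have D: "real_diag_mat N l \<in> carrier_mat N N" by (rule carrier_matI) simp_all
  have Fa: "mat_adjoint F \<in> carrier_mat N N" using Fc by simp
  have "U * real_diag_mat N l * mat_adjoint U = W * F * real_diag_mat N l * (mat_adjoint F * mat_adjoint W)"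
    unfolding U_def by (simp add: adj_mult[OF Wc Fc])
  also have "\<dots> = W * (F * real_diag_mat N l * mat_adjoint F) * mat_adjoint W"
    using Wc Fc D Fa Wa by (simp add: assoc_mult_mat[of _ N N _ N _ N] mult_carrier_sq)
  also have "\<dots> = W * A' * mat_adjoint W" unfolding FDF ..
  also have "\<dots> = (W * mat_adjoint W) * A * (W * mat_adjoint W)"
    unfolding A'_def using Wc Wa A by (simp add: assoc_mult_mat[of _ N N _ N _ N] mult_carrier_sq)
  also have "W * mat_adjoint W = 1\<^sub>m N" using Wu unfolding unitary_mat_def by simp
  finally have "A = U * real_diag_mat N l * mat_adjoint U" using A by simp
  thus ?case using Uu unfolding N_def by blast
qed

lemma mtrace_carrier: assumes "A \<in> carrier_mat N N" shows "mtrace A = (\<Sum>a<N. A $$ (a,a))"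
  unfolding mtrace_def using carrier_matD(1)[OF assms] by simp

lemma swap3: "(\<Sum>a\<in>A. \<Sum>b\<in>B. \<Sum>k\<in>C. f a b k) = (\<Sum>k\<in>C. \<Sum>a\<in>A. \<Sum>b\<in>B. f a b k)"
proof -
  have "(\<Sum>a\<in>A. \<Sum>b\<in>B. \<Sum>k\<in>C. f a b k) = (\<Sum>a\<in>A. \<Sum>k\<in>C. \<Sum>b\<in>B. f a b k)"
    by (rule sum.cong[OF refl], rule sum.swap)
  also have "\<dots> = (\<Sum>k\<in>C. \<Sum>a\<in>A. \<Sum>b\<in>B. f a b k)" by (rule sum.swap)
  finally show ?thesis .
qed

lemma swap3': "(\<Sum>k\<in>C. \<Sum>a\<in>A. \<Sum>b\<in>B. f a b k) = (\<Sum>a\<in>A. \<Sum>b\<in>B. \<Sum>k\<in>C. f a b k)"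
  by (rule swap3[symmetric])

lemma mat_fun_decomp:
  assumes "hermitian_mat N X"
  shows "\<exists>U l. unitary_mat N U \<and> X = U * real_diag_mat N l * mat_adjoint U \<and>
     mat_fun N f X = U * real_diag_mat N (f \<circ> l) * mat_adjoint U"
proof -
  have "X \<in> carrier_mat N N" "mat_adjoint X = X" using assms unfolding hermitian_mat_def by auto
  then obtain U l where "unitary_mat N U \<and> X = U * real_diag_mat N l * mat_adjoint U" using spectral by blast
  hence ex: "\<exists>Y U l. unitary_mat N U \<and> X = U * real_diag_mat N l * mat_adjoint U
        \<and> Y = U * real_diag_mat N (f \<circ> l) * mat_adjoint U" by blast
  show ?thesis unfolding mat_fun_def using someI_ex[OF ex] by blast
qed

definition qf :: "nat \<Rightarrow> complex mat \<Rightarrow> (nat \<Rightarrow> complex) \<Rightarrow> complex" where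
  "qf N Y u = (\<Sum>a<N. \<Sum>b<N. cnj (u a) * Y $$ (a,b) * u b)"

definition ip :: "nat \<Rightarrow> (nat \<Rightarrow> complex) \<Rightarrow> (nat \<Rightarrow> complex) \<Rightarrow> complex" where
  "ip N v u = (\<Sum>b<N. cnj (v b) * u b)"

definition nsq :: "nat \<Rightarrow> (nat \<Rightarrow> complex) \<Rightarrow> real" where
  "nsq N u = (\<Sum>b<N. (cmod (u b))^2)"

lemma cnj_ip_ip: "cnj (ip N v u) * ip N w u' = (\<Sum>a<N. \<Sum>b<N. (v a * cnj (u a)) * (cnj (w b) * u' b))"
  unfolding ip_def by (simp add: sum_product)

lemma cnj_mult_self: "cnj z * z = complex_of_real ((cmod z)^2)"
  using complex_norm_square[of z] by (simp add: mult.commute)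

lemma decomp_qf:
  assumes U: "unitary_mat N U"
  shows "qf N (U * real_diag_mat N l * mat_adjoint U) u =
     (\<Sum>k<N. complex_of_real (l k * (cmod (ip N (\<lambda>b. U $$ (b,k)) u))^2))"
proof -
  have Uc: "U \<in> carrier_mat N N" using U by (rule unitary_carrier)
  have "qf N (U * real_diag_mat N l * mat_adjoint U) u =
     (\<Sum>a<N. \<Sum>b<N. \<Sum>k<N. cnj (u a) * (U $$ (a,k) * complex_of_real (l k) * cnj (U $$ (b,k))) * u b)"
    unfolding qf_def by (intro sum.cong refl) (simp add: udu_entry[OF Uc] sum_distrib_left sum_distrib_right)
  also have "\<dots> = (\<Sum>k<N. \<Sum>a<N. \<Sum>b<N. cnj (u a) * (U $$ (a,k) * complex_of_real (l k) * cnj (U $$ (b,k))) * u b)"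
    by (rule swap3)
  also have "\<dots> = (\<Sum>k<N. complex_of_real (l k) * (cnj (ip N (\<lambda>b. U $$ (b,k)) u) * ip N (\<lambda>b. U $$ (b,k)) u))"
    unfolding cnj_ip_ip sum_distrib_left by (intro sum.cong refl) (simp add: mult_ac)
  also have "\<dots> = (\<Sum>k<N. complex_of_real (l k * (cmod (ip N (\<lambda>b. U $$ (b,k)) u))^2))"
    by (intro sum.cong refl) (simp add: cnj_mult_self)
  finally show ?thesis .
qed

lemma parseval:
  assumes U: "unitary_mat N U"
  shows "(\<Sum>k<N. (cmod (ip N (\<lambda>b. U $$ (b,k)) u))^2) = nsq N u"
proof -
  have "complex_of_real (\<Sum>k<N. (cmod (ip N (\<lambda>b. U $$ (b,k)) u))^2) =
        (\<Sum>k<N. cnj (ip N (\<lambda>b. U $$ (b,k)) u) * ip N (\<lambda>b. U $$ (b,k)) u)"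
    by (simp add: cnj_mult_self)
  also have "\<dots> = (\<Sum>k<N. \<Sum>a<N. \<Sum>b<N. cnj (u a) * u b * (U $$ (a,k) * cnj (U $$ (b,k))))"
    unfolding cnj_ip_ip by (intro sum.cong refl) (simp add: mult_ac)
  also have "\<dots> = (\<Sum>a<N. \<Sum>b<N. \<Sum>k<N. cnj (u a) * u b * (U $$ (a,k) * cnj (U $$ (b,k))))"
    by (rule swap3')
  also have "\<dots> = (\<Sum>a<N. \<Sum>b<N. cnj (u a) * u b * (\<Sum>k<N. U $$ (a,k) * cnj (U $$ (b,k))))"
    by (simp add: sum_distrib_left)
  also have "\<dots> = (\<Sum>a<N. \<Sum>b<N. if a = b then cnj (u a) * u a else 0)"
    by (intro sum.cong refl) (simp add: unitary_rows[OF U])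
  also have "\<dots> = complex_of_real (nsq N u)"
    unfolding nsq_def by (simp add: cnj_mult_self)
  finally show ?thesis by (metis of_real_eq_iff)
qed

lemma unit_col:
  assumes U: "unitary_mat N U" and k: "k < N"
  shows "nsq N (\<lambda>b. U $$ (b,k)) = 1"
proof -
  have "complex_of_real (nsq N (\<lambda>b. U $$ (b,k))) = (\<Sum>b<N. cnj (U $$ (b,k)) * U $$ (b,k))"
    unfolding nsq_def by (simp add: cnj_mult_self)
  also have "\<dots> = 1" using unitary_cols[OF U k k] by simp
  finally show ?thesis by (metis of_real_eq_1_iff)
qed

lemma ip_cols:
  assumes U: "unitary_mat N U" and k: "k < N" and j: "j < N"
  shows "ip N (\<lambda>b. U $$ (b,k)) (\<lambda>b. U $$ (b,j)) = (if k = j then 1 else 0)"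
  unfolding ip_def using unitary_cols[OF U k j] .

lemma qf_col:
  assumes U: "unitary_mat N U" and j: "j < N"
  shows "qf N (U * real_diag_mat N l * mat_adjoint U) (\<lambda>b. U $$ (b,j)) = complex_of_real (l j)"
proof -
  have "qf N (U * real_diag_mat N l * mat_adjoint U) (\<lambda>b. U $$ (b,j)) =
     (\<Sum>k<N. if k = j then complex_of_real (l j) else 0)"
    unfolding decomp_qf[OF U] by (intro sum.cong refl) (simp add: ip_cols[OF U _ j])
  also have "\<dots> = complex_of_real (l j)" using j by simp
  finally show ?thesis .
qed

lemma udu_carrier: assumes "U \<in> carrier_mat N N" shows "U * real_diag_mat N g * mat_adjoint U \<in> carrier_mat N N"
proof -
  have D: "real_diag_mat N g \<in> carrier_mat N N" by (rule carrier_matI) simp_all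
  show ?thesis by (rule mult_carrier_mat[OF mult_carrier_mat[OF assms D] adj_carrier[OF assms]])
qed

lemma trace_udu_mult:
  assumes U: "unitary_mat N U" and Y: "Y \<in> carrier_mat N N"
  shows "mtrace (Y * (U * real_diag_mat N g * mat_adjoint U)) = (\<Sum>k<N. complex_of_real (g k) * qf N Y (\<lambda>b. U $$ (b,k)))"
proof -
  have Uc: "U \<in> carrier_mat N N" using U by (rule unitary_carrier)
  have X: "U * real_diag_mat N g * mat_adjoint U \<in> carrier_mat N N" by (rule udu_carrier[OF Uc])
  have e: "(Y * (U * real_diag_mat N g * mat_adjoint U)) $$ (a,a) =
      (\<Sum>b<N. \<Sum>k<N. Y $$ (a,b) * (U $$ (b,k) * complex_of_real (g k) * cnj (U $$ (a,k))))" if a: "a < N" for a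
    unfolding mult_entry[OF Y X a a] sum_distrib_left[symmetric] using a
    by (intro sum.cong refl) (simp add: udu_entry[OF Uc])
  have "mtrace (Y * (U * real_diag_mat N g * mat_adjoint U)) =
     (\<Sum>a<N. \<Sum>b<N. \<Sum>k<N. Y $$ (a,b) * (U $$ (b,k) * complex_of_real (g k) * cnj (U $$ (a,k))))"
    unfolding mtrace_carrier[OF mult_carrier_mat[OF Y X]] by (intro sum.cong refl, rule e, simp)
  also have "\<dots> = (\<Sum>k<N. \<Sum>a<N. \<Sum>b<N. Y $$ (a,b) * (U $$ (b,k) * complex_of_real (g k) * cnj (U $$ (a,k))))"
    by (rule swap3)
  also have "\<dots> = (\<Sum>k<N. complex_of_real (g k) * qf N Y (\<lambda>b. U $$ (b,k)))"
    unfolding qf_def sum_distrib_left by (intro sum.cong refl) (simp add: mult_ac)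
  finally show ?thesis .
qed

lemma trace_udu:
  assumes U: "unitary_mat N U"
  shows "mtrace (U * real_diag_mat N g * mat_adjoint U) = complex_of_real (\<Sum>k<N. g k)"
proof -
  have Uc: "U \<in> carrier_mat N N" using U by (rule unitary_carrier)
  have X: "U * real_diag_mat N g * mat_adjoint U \<in> carrier_mat N N" by (rule udu_carrier[OF Uc])
  have e: "(U * real_diag_mat N g * mat_adjoint U) $$ (a,a) = (\<Sum>k<N. complex_of_real (g k) * (cnj (U $$ (a,k)) * U $$ (a,k)))"
    if a: "a < N" for a
    unfolding udu_entry[OF Uc a a] by (intro sum.cong refl) (simp add: mult_ac)
  have "mtrace (U * real_diag_mat N g * mat_adjoint U) = (\<Sum>a<N. (U * real_diag_mat N g * mat_adjoint U) $$ (a,a))"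
    by (rule mtrace_carrier[OF X])
  also have "\<dots> = (\<Sum>a<N. \<Sum>k<N. complex_of_real (g k) * (cnj (U $$ (a,k)) * U $$ (a,k)))"
    by (intro sum.cong refl, rule e, simp)
  also have "\<dots> = (\<Sum>k<N. \<Sum>a<N. complex_of_real (g k) * (cnj (U $$ (a,k)) * U $$ (a,k)))"
    by (rule sum.swap)
  also have "\<dots> = (\<Sum>k<N. complex_of_real (g k) * (\<Sum>a<N. cnj (U $$ (a,k)) * U $$ (a,k)))"
    by (simp add: sum_distrib_left)
  also have "\<dots> = (\<Sum>k<N. complex_of_real (g k))"
    by (intro sum.cong refl) (simp add: unitary_cols[OF U])
  finally show ?thesis by simp
qed

lemma trace_qf_sum:
  assumes U: "unitary_mat N U" and Y: "Y \<in> carrier_mat N N"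
  shows "mtrace Y = (\<Sum>k<N. qf N Y (\<lambda>b. U $$ (b,k)))"
proof -
  have "(\<Sum>k<N. qf N Y (\<lambda>b. U $$ (b,k))) = (\<Sum>k<N. \<Sum>a<N. \<Sum>b<N. Y $$ (a,b) * (U $$ (b,k) * cnj (U $$ (a,k))))"
    unfolding qf_def by (intro sum.cong refl) (simp add: mult_ac)
  also have "\<dots> = (\<Sum>a<N. \<Sum>b<N. \<Sum>k<N. Y $$ (a,b) * (U $$ (b,k) * cnj (U $$ (a,k))))"
    by (rule swap3')
  also have "\<dots> = (\<Sum>a<N. \<Sum>b<N. Y $$ (a,b) * (\<Sum>k<N. U $$ (b,k) * cnj (U $$ (a,k))))"
    by (simp add: sum_distrib_left)
  also have "\<dots> = (\<Sum>a<N. \<Sum>b<N. if b = a then Y $$ (a,a) else 0)"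
    by (intro sum.cong refl) (auto simp: unitary_rows[OF U])
  also have "\<dots> = mtrace Y" unfolding mtrace_carrier[OF Y] by simp
  finally show ?thesis ..
qed

lemma qf_vec:
  assumes Y: "Y \<in> carrier_mat N N" and v: "v \<in> carrier_vec N"
  shows "(Y *\<^sub>v v) \<bullet>c v = qf N Y (\<lambda>i. v $ i)"
proof -
  have "(Y *\<^sub>v v) \<bullet>c v = (\<Sum>a<N. (\<Sum>b<N. Y $$ (a,b) * v $ b) * cnj (v $ a))"
    using Y v by (simp add: scalar_prod_def atLeast0LessThan carrier_matD)
  also have "\<dots> = qf N Y (\<lambda>i. v $ i)"
    unfolding qf_def sum_distrib_right by (intro sum.cong refl) (simp add: mult_ac)
  finally show ?thesis .
qed

lemma psd_qf:
  assumes "psd_mat N Y"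
  shows "Re (qf N Y u) \<ge> 0" "Im (qf N Y u) = 0"
proof -
  have Y: "Y \<in> carrier_mat N N" using assms unfolding psd_mat_def hermitian_mat_def by auto
  define v where "v = vec N u"
  have v: "v \<in> carrier_vec N" unfolding v_def by simp
  have "qf N Y u = qf N Y (\<lambda>i. v $ i)" unfolding qf_def v_def by (intro sum.cong refl) simp
  also have "\<dots> = (Y *\<^sub>v v) \<bullet>c v" using qf_vec[OF Y v] by simp
  finally have e: "qf N Y u = (Y *\<^sub>v v) \<bullet>c v" .
  show "Re (qf N Y u) \<ge> 0" "Im (qf N Y u) = 0" unfolding e using assms v unfolding psd_mat_def by auto
qed

lemma psd_qfI:
  assumes "hermitian_mat N Y" and "\<And>u. Re (qf N Y u) \<ge> 0 \<and> Im (qf N Y u) = 0"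
  shows "psd_mat N Y"
proof -
  have Y: "Y \<in> carrier_mat N N" using assms unfolding hermitian_mat_def by auto
  { fix v :: "complex vec" assume v: "v \<in> carrier_vec N"
    have "Re ((Y *\<^sub>v v) \<bullet>c v) \<ge> 0 \<and> Im ((Y *\<^sub>v v) \<bullet>c v) = 0" unfolding qf_vec[OF Y v] using assms(2) by simp }
  thus ?thesis using assms(1) unfolding psd_mat_def by auto
qed

lemma minus_entry: "A \<in> carrier_mat N N \<Longrightarrow> B \<in> carrier_mat N N \<Longrightarrow> a < N \<Longrightarrow> b < N \<Longrightarrow> (A - B) $$ (a,b) = A $$ (a,b) - B $$ (a,b)"
  by (simp add: carrier_matD)

lemma hermitian_diff:
  assumes "hermitian_mat N A" "hermitian_mat N B"
  shows "hermitian_mat N (A - B)"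
proof -
  have A: "A \<in> carrier_mat N N" and B: "B \<in> carrier_mat N N" and Ah: "mat_adjoint A = A" and Bh: "mat_adjoint B = B"
    using assms unfolding hermitian_mat_def by auto
  have AB: "A - B \<in> carrier_mat N N" using B by (rule minus_carrier_mat)
  have "mat_adjoint (A - B) = A - B"
  proof (rule eq_matI)
    fix i j assume "i < dim_row (A - B)" "j < dim_col (A - B)"
    hence i: "i < N" and j: "j < N" using A B by auto
    have "mat_adjoint (A - B) $$ (i,j) = cnj ((A - B) $$ (j,i))" using i j A B by (simp add: carrier_matD)
    also have "\<dots> = cnj (A $$ (j,i)) - cnj (B $$ (j,i))" using minus_entry[OF A B j i] by simp
    also have "cnj (A $$ (j,i)) = mat_adjoint A $$ (i,j)" using i j A by (simp add: carrier_matD)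
    also have "cnj (B $$ (j,i)) = mat_adjoint B $$ (i,j)" using i j B by (simp add: carrier_matD)
    finally show "mat_adjoint (A - B) $$ (i,j) = (A - B) $$ (i,j)" using Ah Bh minus_entry[OF A B i j] by simp
  qed (use A B in auto)
  thus ?thesis using AB unfolding hermitian_mat_def by simp
qed

lemma mtrace_minus: assumes A: "A \<in> carrier_mat N N" and B: "B \<in> carrier_mat N N"
  shows "mtrace (A - B) = mtrace A - mtrace B"
proof -
  have "mtrace (A - B) = (\<Sum>a<N. (A - B) $$ (a,a))" by (rule mtrace_carrier[OF minus_carrier_mat[OF B]])
  also have "\<dots> = (\<Sum>a<N. A $$ (a,a) - B $$ (a,a))" by (intro sum.cong refl) (simp add: minus_entry[OF A B])
  also have "\<dots> = mtrace A - mtrace B" by (simp add: sum_subtractf mtrace_carrier[OF A] mtrace_carrier[OF B])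
  finally show ?thesis .
qed

lemma mtrace_plus: assumes A: "A \<in> carrier_mat N N" and B: "B \<in> carrier_mat N N"
  shows "mtrace (A + B) = mtrace A + mtrace B"
proof -
  have "mtrace (A + B) = (\<Sum>a<N. (A + B) $$ (a,a))" by (rule mtrace_carrier[OF add_carrier_mat[OF B]])
  also have "\<dots> = (\<Sum>a<N. A $$ (a,a) + B $$ (a,a))" using B by (intro sum.cong refl) (simp add: carrier_matD)
  also have "\<dots> = mtrace A + mtrace B" by (simp add: sum.distrib mtrace_carrier[OF A] mtrace_carrier[OF B])
  finally show ?thesis .
qed

lemma mtrace_smult: assumes A: "A \<in> carrier_mat N N" shows "mtrace (c \<cdot>\<^sub>m A) = c * mtrace A"
proof -
  have "mtrace (c \<cdot>\<^sub>m A) = (\<Sum>a<N. (c \<cdot>\<^sub>m A) $$ (a,a))" by (rule mtrace_carrier[OF smult_carrier_mat[OF A]])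
  also have "\<dots> = (\<Sum>a<N. c * A $$ (a,a))" using A by (intro sum.cong refl) (simp add: carrier_matD)
  also have "\<dots> = c * mtrace A" by (simp add: sum_distrib_left mtrace_carrier[OF A])
  finally show ?thesis .
qed

lemma qf_minus: "A \<in> carrier_mat N N \<Longrightarrow> B \<in> carrier_mat N N \<Longrightarrow> qf N (A - B) u = qf N A u - qf N B u"
  unfolding qf_def by (simp add: minus_entry sum_subtractf algebra_simps)

lemma qf_zero: "qf N (0\<^sub>m N N) u = 0"
  unfolding qf_def by simp

lemma qf_scal_one: "qf N (c \<cdot>\<^sub>m 1\<^sub>m N) u = c * complex_of_real (nsq N u)"
proof -
  have "qf N (c \<cdot>\<^sub>m 1\<^sub>m N) u = (\<Sum>a<N. \<Sum>b<N. if a = b then c * (cnj (u a) * u a) else 0)"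
    unfolding qf_def by (intro sum.cong refl) auto
  also have "\<dots> = c * complex_of_real (nsq N u)"
    unfolding nsq_def by (simp add: cnj_mult_self sum_distrib_left)
  finally show ?thesis .
qed

lemma abs_decomp:
  assumes "hermitian_mat N X"
  obtains U l where "unitary_mat N U" "X = U * real_diag_mat N l * mat_adjoint U"
    "mat_abs N X = U * real_diag_mat N (abs \<circ> l) * mat_adjoint U"
  using mat_fun_decomp[OF assms, of abs] unfolding mat_abs_def by blast

lemma abs_carrier: "hermitian_mat N X \<Longrightarrow> mat_abs N X \<in> carrier_mat N N"
  by (metis abs_decomp udu_carrier unitary_carrier)

lemma herm_carrier: "hermitian_mat N X \<Longrightarrow> X \<in> carrier_mat N N"
  unfolding hermitian_mat_def by simp

lemma psd_herm: "psd_mat N X \<Longrightarrow> hermitian_mat N X"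
  unfolding psd_mat_def by simp

lemma psd_abs_le:
  assumes A: "psd_mat N A" and B: "psd_mat N B"
  shows "Re (mtrace (mat_abs N (A - B))) \<le> Re (mtrace A) + Re (mtrace B)"
proof -
  have Ac: "A \<in> carrier_mat N N" and Bc: "B \<in> carrier_mat N N" using A B psd_herm herm_carrier by blast+
  have H: "hermitian_mat N (A - B)" by (rule hermitian_diff[OF psd_herm[OF A] psd_herm[OF B]])
  obtain U l where U: "unitary_mat N U" and X: "A - B = U * real_diag_mat N l * mat_adjoint U"
    and Xa: "mat_abs N (A - B) = U * real_diag_mat N (abs \<circ> l) * mat_adjoint U" using abs_decomp[OF H] by blast
  have lk: "l k = Re (qf N A (\<lambda>b. U $$ (b,k))) - Re (qf N B (\<lambda>b. U $$ (b,k)))" if k: "k < N" for k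
  proof -
    have "complex_of_real (l k) = qf N (A - B) (\<lambda>b. U $$ (b,k))" unfolding X by (rule qf_col[OF U k, symmetric])
    also have "\<dots> = qf N A (\<lambda>b. U $$ (b,k)) - qf N B (\<lambda>b. U $$ (b,k))" by (rule qf_minus[OF Ac Bc])
    finally show ?thesis by (metis Re_complex_of_real minus_complex.simps(1))
  qed
  have "Re (mtrace (mat_abs N (A - B))) = (\<Sum>k<N. \<bar>l k\<bar>)" unfolding Xa trace_udu[OF U] by simp
  also have "\<dots> \<le> (\<Sum>k<N. Re (qf N A (\<lambda>b. U $$ (b,k))) + Re (qf N B (\<lambda>b. U $$ (b,k))))"
  proof (rule sum_mono)
    fix k assume "k \<in> {..<N}"
    thus "\<bar>l k\<bar> \<le> Re (qf N A (\<lambda>b. U $$ (b,k))) + Re (qf N B (\<lambda>b. U $$ (b,k)))"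
      using lk[of k] psd_qf(1)[OF A, of "\<lambda>b. U $$ (b,k)"] psd_qf(1)[OF B, of "\<lambda>b. U $$ (b,k)"] by auto
  qed
  also have "\<dots> = Re (mtrace A) + Re (mtrace B)"
    unfolding trace_qf_sum[OF U Ac] trace_qf_sum[OF U Bc] by (simp add: sum.distrib)
  finally show ?thesis .
qed

lemma loewner_trace:
  assumes L0: "loewner_le N (0\<^sub>m N N) L" and L1: "loewner_le N L (complex_of_real p \<cdot>\<^sub>m 1\<^sub>m N)"
    and H: "hermitian_mat N X"
  shows "Re (mtrace (L * X)) \<le> p * (Re (mtrace X) + Re (mtrace (mat_abs N X))) / 2"
proof -
  have Lc: "L \<in> carrier_mat N N" using L0 unfolding loewner_le_def hermitian_mat_def by auto
  have P0: "psd_mat N (L - 0\<^sub>m N N)" and P1: "psd_mat N (complex_of_real p \<cdot>\<^sub>m 1\<^sub>m N - L)"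
    using L0 L1 unfolding loewner_le_def by auto
  obtain U l where U: "unitary_mat N U" and X: "X = U * real_diag_mat N l * mat_adjoint U"
    and Xa: "mat_abs N X = U * real_diag_mat N (abs \<circ> l) * mat_adjoint U" using abs_decomp[OF H] by blast
  define r where "r k = Re (qf N L (\<lambda>b. U $$ (b,k)))" for k
  have r: "0 \<le> r k \<and> r k \<le> p" if k: "k < N" for k
  proof -
    have "qf N (L - 0\<^sub>m N N) (\<lambda>b. U $$ (b,k)) = qf N L (\<lambda>b. U $$ (b,k))"
      using qf_minus[OF Lc zero_carrier_mat] qf_zero by simp
    hence a: "0 \<le> r k" using psd_qf(1)[OF P0, of "\<lambda>b. U $$ (b,k)"] unfolding r_def by simp
    have "qf N (complex_of_real p \<cdot>\<^sub>m 1\<^sub>m N - L) (\<lambda>b. U $$ (b,k)) = complex_of_real p - qf N L (\<lambda>b. U $$ (b,k))"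
      using qf_minus[OF smult_carrier_mat[OF one_carrier_mat] Lc] qf_scal_one unit_col[OF U k] by simp
    hence "0 \<le> p - r k" using psd_qf(1)[OF P1, of "\<lambda>b. U $$ (b,k)"] unfolding r_def by simp
    thus ?thesis using a by simp
  qed
  have "Re (mtrace (L * X)) = (\<Sum>k<N. l k * r k)"
    unfolding X trace_udu_mult[OF U Lc] r_def by simp
  also have "\<dots> \<le> (\<Sum>k<N. p * (l k + \<bar>l k\<bar>) / 2)"
  proof (rule sum_mono)
    fix k assume "k \<in> {..<N}"
    hence "0 \<le> r k" "r k \<le> p" using r by auto
    thus "l k * r k \<le> p * (l k + \<bar>l k\<bar>) / 2"
    proof (cases "l k \<ge> 0")
      case True
      thus ?thesis using \<open>r k \<le> p\<close> mult_left_mono[OF \<open>r k \<le> p\<close> True] by (simp add: mult.commute)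
    next
      case False
      hence "l k * r k \<le> 0" using \<open>0 \<le> r k\<close> by (simp add: mult_nonpos_nonneg)
      thus ?thesis using False by simp
    qed
  qed
  also have "\<dots> = p * ((\<Sum>k<N. l k) + (\<Sum>k<N. \<bar>l k\<bar>)) / 2"
    by (simp add: sum_divide_distrib[symmetric] sum_distrib_left[symmetric] sum.distrib)
  also have "\<dots> = p * (Re (mtrace X) + Re (mtrace (mat_abs N X))) / 2"
    unfolding Xa unfolding X trace_udu[OF U] by simp
  finally show ?thesis .
qed

lemma sum_embed:
  fixes N N' :: nat and \<psi> :: "nat \<Rightarrow> nat"
  assumes inj: "inj_on \<psi> {..<N}" and img: "\<psi> ` {..<N} \<subseteq> {..<N'}"
    and z: "\<And>a'. a' < N' \<Longrightarrow> a' \<notin> \<psi> ` {..<N} \<Longrightarrow> g a' = 0"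
  shows "(\<Sum>a'<N'. g a') = (\<Sum>a<N. g (\<psi> a))"
proof -
  have "(\<Sum>a'\<in>\<psi> ` {..<N}. g a') = (\<Sum>a'<N'. g a')"
    by (rule sum.mono_neutral_left) (use img z in auto)
  hence "(\<Sum>a'<N'. g a') = (\<Sum>a'\<in>\<psi> ` {..<N}. g a')" by simp
  also have "\<dots> = (\<Sum>a<N. g (\<psi> a))" by (rule sum.reindex[OF inj, unfolded comp_def])
  finally show ?thesis .
qed

lemma ip_swap: "ip N v u = cnj (ip N u v)"
  unfolding ip_def by (simp add: mult.commute)

lemma abs_embed:
  assumes X: "hermitian_mat N' X" and Z: "hermitian_mat N Z"
    and inj: "inj_on \<psi> {..<N}" and img: "\<psi> ` {..<N} \<subseteq> {..<N'}"
    and XZ: "\<And>a b. a < N \<Longrightarrow> b < N \<Longrightarrow> X $$ (\<psi> a, \<psi> b) = Z $$ (a,b)"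
    and X0: "\<And>a' b'. a' < N' \<Longrightarrow> b' < N' \<Longrightarrow> a' \<notin> \<psi> ` {..<N} \<or> b' \<notin> \<psi> ` {..<N} \<Longrightarrow> X $$ (a',b') = 0"
  shows "Re (mtrace (mat_abs N' X)) \<le> Re (mtrace (mat_abs N Z))"
proof -
  obtain U l where U: "unitary_mat N' U" and Xd: "X = U * real_diag_mat N' l * mat_adjoint U"
    and Xa: "mat_abs N' X = U * real_diag_mat N' (abs \<circ> l) * mat_adjoint U" using abs_decomp[OF X] by blast
  obtain V m where V: "unitary_mat N V" and Zd: "Z = V * real_diag_mat N m * mat_adjoint V"
    and Za: "mat_abs N Z = V * real_diag_mat N (abs \<circ> m) * mat_adjoint V" using abs_decomp[OF Z] by blast
  have qfXZ: "qf N' X u = qf N Z (u \<circ> \<psi>)" for u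
  proof -
    have "qf N' X u = (\<Sum>a'<N'. \<Sum>b<N. cnj (u a') * X $$ (a', \<psi> b) * u (\<psi> b))"
      unfolding qf_def
    proof (rule sum.cong[OF refl])
      fix a' assume "a' \<in> {..<N'}"
      show "(\<Sum>b'<N'. cnj (u a') * X $$ (a', b') * u b') = (\<Sum>b<N. cnj (u a') * X $$ (a', \<psi> b) * u (\<psi> b))"
        by (rule sum_embed[OF inj img]) (use X0 \<open>a' \<in> {..<N'}\<close> in auto)
    qed
    also have "\<dots> = (\<Sum>a<N. \<Sum>b<N. cnj (u (\<psi> a)) * X $$ (\<psi> a, \<psi> b) * u (\<psi> b))"
      by (rule sum_embed[OF inj img]) (use X0 img in \<open>auto intro!: sum.neutral\<close>)
    also have "\<dots> = qf N Z (u \<circ> \<psi>)" unfolding qf_def by (intro sum.cong refl) (simp add: XZ)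
    finally show ?thesis .
  qed
  define c where "c j k = (cmod (ip N (\<lambda>b. V $$ (b,j)) ((\<lambda>b. U $$ (b,k)) \<circ> \<psi>)))^2" for j k
  have lk: "l k = (\<Sum>j<N. m j * c j k)" if k: "k < N'" for k
  proof -
    have "complex_of_real (l k) = qf N' X (\<lambda>b. U $$ (b,k))" unfolding Xd by (rule qf_col[OF U k, symmetric])
    also have "\<dots> = qf N Z ((\<lambda>b. U $$ (b,k)) \<circ> \<psi>)" by (rule qfXZ)
    also have "\<dots> = complex_of_real (\<Sum>j<N. m j * c j k)" unfolding Zd decomp_qf[OF V] c_def by simp
    finally show ?thesis by (metis of_real_eq_iff)
  qed
  have csum: "(\<Sum>k<N'. c j k) = 1" if j: "j < N" for j
  proof -
    define vt where "vt b' = (if b' \<in> \<psi> ` {..<N} then V $$ (inv_into {..<N} \<psi> b', j) else 0)" for b'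
    have vtpsi: "vt (\<psi> b) = V $$ (b,j)" if "b < N" for b
      unfolding vt_def using that inj by (simp add: inv_into_f_f)
    have ipk: "ip N (\<lambda>b. V $$ (b,j)) ((\<lambda>b. U $$ (b,k)) \<circ> \<psi>) = cnj (ip N' (\<lambda>b. U $$ (b,k)) vt)" for k
    proof -
      have "ip N' (\<lambda>b. U $$ (b,k)) vt = (\<Sum>b<N. cnj (U $$ (\<psi> b, k)) * vt (\<psi> b))"
        unfolding ip_def by (rule sum_embed[OF inj img]) (simp add: vt_def)
      also have "\<dots> = (\<Sum>b<N. cnj (U $$ (\<psi> b, k)) * V $$ (b,j))" by (intro sum.cong refl) (simp add: vtpsi)
      finally show ?thesis unfolding ip_def by (simp add: mult.commute)
    qed
    have "(\<Sum>k<N'. c j k) = (\<Sum>k<N'. (cmod (ip N' (\<lambda>b. U $$ (b,k)) vt))^2)"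
      unfolding c_def ipk by simp
    also have "\<dots> = nsq N' vt" by (rule parseval[OF U])
    also have "\<dots> = (\<Sum>b<N. (cmod (vt (\<psi> b)))^2)" unfolding nsq_def
      by (rule sum_embed[OF inj img]) (simp add: vt_def)
    also have "\<dots> = nsq N (\<lambda>b. V $$ (b,j))" unfolding nsq_def by (intro sum.cong refl) (simp add: vtpsi)
    also have "\<dots> = 1" by (rule unit_col[OF V j])
    finally show ?thesis .
  qed
  have "Re (mtrace (mat_abs N' X)) = (\<Sum>k<N'. \<bar>l k\<bar>)" unfolding Xa trace_udu[OF U] by simp
  also have "\<dots> \<le> (\<Sum>k<N'. \<Sum>j<N. \<bar>m j\<bar> * c j k)"
  proof (rule sum_mono)
    fix k assume "k \<in> {..<N'}"
    hence "\<bar>l k\<bar> = \<bar>\<Sum>j<N. m j * c j k\<bar>" using lk by simp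
    also have "\<dots> \<le> (\<Sum>j<N. \<bar>m j * c j k\<bar>)" by (rule sum_abs)
    also have "\<dots> = (\<Sum>j<N. \<bar>m j\<bar> * c j k)" by (simp add: abs_mult c_def)
    finally show "\<bar>l k\<bar> \<le> (\<Sum>j<N. \<bar>m j\<bar> * c j k)" .
  qed
  also have "\<dots> = (\<Sum>j<N. \<bar>m j\<bar> * (\<Sum>k<N'. c j k))" by (simp add: sum_distrib_left sum.swap[of _ "{..<N'}"])
  also have "\<dots> = (\<Sum>j<N. \<bar>m j\<bar>)" by (simp add: csum)
  also have "\<dots> = Re (mtrace (mat_abs N Z))" unfolding Za trace_udu[OF V] by simp
  finally show ?thesis .
qed

lemma sum_split_mult:
  fixes n1 n2 :: nat
  shows "(\<Sum>i<n1*n2. f i) = (\<Sum>a<n1. \<Sum>b<n2. f (a*n2 + b))"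
proof -
  have "(\<Sum>i<n1*n2. f i) = (\<Sum>a<n1. sum f {a*n2..<a*n2+n2})" by (rule sum.nat_group[symmetric])
  also have "\<dots> = (\<Sum>a<n1. \<Sum>b<n2. f (a*n2 + b))"
  proof (rule sum.cong[OF refl])
    fix a
    have "sum f {0 + a*n2..<n2 + a*n2} = (\<Sum>b\<in>{0..<n2}. f (b + a*n2))" by (rule sum.shift_bounds_nat_ivl)
    thus "sum f {a*n2..<a*n2+n2} = (\<Sum>b<n2. f (a*n2 + b))" by (simp add: atLeast0LessThan add.commute)
  qed
  finally show ?thesis .
qed

lemma gram_psd:
  fixes w :: "'k \<Rightarrow> nat \<Rightarrow> complex"
  assumes X: "X \<in> carrier_mat N N" and K: "finite K" and c: "\<And>k. k \<in> K \<Longrightarrow> c k \<ge> 0"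
    and e: "\<And>a b. a < N \<Longrightarrow> b < N \<Longrightarrow> X $$ (a,b) = (\<Sum>k\<in>K. complex_of_real (c k) * w k a * cnj (w k b))"
  shows "psd_mat N X"
proof (rule psd_qfI)
  show "hermitian_mat N X" unfolding hermitian_mat_def
  proof
    show "X \<in> carrier_mat N N" by fact
    show "mat_adjoint X = X"
    proof (rule eq_matI)
      fix a b assume "a < dim_row X" "b < dim_col X"
      hence a: "a < N" and b: "b < N" using X by auto
      have "mat_adjoint X $$ (a,b) = cnj (X $$ (b,a))" using a b X by (simp add: carrier_matD)
      also have "\<dots> = X $$ (a,b)" unfolding e[OF a b] e[OF b a] by (simp add: mult_ac)
      finally show "mat_adjoint X $$ (a,b) = X $$ (a,b)" .
    qed (use X in auto)
  qed
  fix u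
  have "qf N X u = (\<Sum>a<N. \<Sum>b<N. \<Sum>k\<in>K. complex_of_real (c k) * ((w k a * cnj (u a)) * (cnj (w k b) * u b)))"
    unfolding qf_def by (intro sum.cong refl) (simp add: e sum_distrib_left sum_distrib_right mult_ac)
  also have "\<dots> = (\<Sum>k\<in>K. \<Sum>a<N. \<Sum>b<N. complex_of_real (c k) * ((w k a * cnj (u a)) * (cnj (w k b) * u b)))"
    by (rule swap3)
  also have "\<dots> = (\<Sum>k\<in>K. complex_of_real (c k * (cmod (ip N (w k) u))^2))"
  proof (rule sum.cong[OF refl])
    fix k assume "k \<in> K"
    have "(\<Sum>a<N. \<Sum>b<N. complex_of_real (c k) * ((w k a * cnj (u a)) * (cnj (w k b) * u b))) =
       complex_of_real (c k) * (\<Sum>a<N. \<Sum>b<N. (w k a * cnj (u a)) * (cnj (w k b) * u b))"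
      by (simp add: sum_distrib_left)
    also have "(\<Sum>a<N. \<Sum>b<N. (w k a * cnj (u a)) * (cnj (w k b) * u b)) = cnj (ip N (w k) u) * ip N (w k) u"
      by (rule cnj_ip_ip[symmetric])
    also have "\<dots> = complex_of_real ((cmod (ip N (w k) u))^2)" by (rule cnj_mult_self)
    finally show "(\<Sum>a<N. \<Sum>b<N. complex_of_real (c k) * ((w k a * cnj (u a)) * (cnj (w k b) * u b))) =
       complex_of_real (c k * (cmod (ip N (w k) u))^2)" by simp
  qed
  also have "\<dots> = complex_of_real (\<Sum>k\<in>K. c k * (cmod (ip N (w k) u))^2)" by simp
  finally have q: "qf N X u = complex_of_real (\<Sum>k\<in>K. c k * (cmod (ip N (w k) u))^2)" .
  have "(\<Sum>k\<in>K. c k * (cmod (ip N (w k) u))^2) \<ge> 0" by (rule sum_nonneg) (simp add: c)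
  thus "Re (qf N X u) \<ge> 0 \<and> Im (qf N X u) = 0" unfolding q by simp
qed

lemma psd_gram:
  assumes "psd_mat N A"
  shows "\<exists>U \<alpha>. (\<forall>k<N. \<alpha> k \<ge> (0::real)) \<and>
    (\<forall>a<N. \<forall>b<N. A $$ (a,b) = (\<Sum>k<N. complex_of_real (\<alpha> k) * U $$ (a,k) * cnj (U $$ (b,k))))"
proof -
  have H: "hermitian_mat N A" using assms by (rule psd_herm)
  obtain U l where U: "unitary_mat N U" and Ad: "A = U * real_diag_mat N l * mat_adjoint U"
    using abs_decomp[OF H] by blast
  have Uc: "U \<in> carrier_mat N N" using U by (rule unitary_carrier)
  have "l k \<ge> 0" if k: "k < N" for k
    using psd_qf(1)[OF assms, of "\<lambda>b. U $$ (b,k)"] unfolding Ad qf_col[OF U k] by simp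
  moreover have "A $$ (a,b) = (\<Sum>k<N. complex_of_real (l k) * U $$ (a,k) * cnj (U $$ (b,k)))" if "a < N" "b < N" for a b
    unfolding Ad udu_entry[OF Uc that] by (simp add: mult_ac)
  ultimately show ?thesis by blast
qed

lemma kron_dims[simp]: "dim_row (kron A B) = dim_row A * dim_row B" "dim_col (kron A B) = dim_col A * dim_col B"
  unfolding kron_def by simp_all

lemma kron_carrier: "A \<in> carrier_mat n1 n1 \<Longrightarrow> B \<in> carrier_mat n2 n2 \<Longrightarrow> kron A B \<in> carrier_mat (n1*n2) (n1*n2)"
  by (rule carrier_matI) (simp_all add: carrier_matD)

lemma kron_entry:
  assumes A: "A \<in> carrier_mat n1 n1" and B: "B \<in> carrier_mat n2 n2" and a: "a < n1*n2" and b: "b < n1*n2"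
  shows "kron A B $$ (a,b) = A $$ (a div n2, b div n2) * B $$ (a mod n2, b mod n2)"
  unfolding kron_def using A B a b by (simp add: carrier_matD)

lemma div_mod_bounds: "a < n1 * (n2::nat) \<Longrightarrow> a div n2 < n1 \<and> a mod n2 < n2"
  by (metis less_mult_imp_div_less mod_less_divisor mult_0_right not_gr_zero not_less_zero)

lemma kron_psd:
  assumes A: "psd_mat n1 A" and B: "psd_mat n2 B"
  shows "psd_mat (n1*n2) (kron A B)"
proof -
  have Ac: "A \<in> carrier_mat n1 n1" and Bc: "B \<in> carrier_mat n2 n2" using A B psd_herm herm_carrier by blast+
  from psd_gram[OF A] obtain U \<alpha> where al0: "\<forall>k<n1. \<alpha> k \<ge> 0"
    and Ae0: "\<forall>a<n1. \<forall>b<n1. A $$ (a,b) = (\<Sum>k<n1. complex_of_real (\<alpha> k) * U $$ (a,k) * cnj (U $$ (b,k)))"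
    by blast
  have al: "\<And>k. k < n1 \<Longrightarrow> \<alpha> k \<ge> 0" using al0 by blast
  have Ae: "\<And>a b. a < n1 \<Longrightarrow> b < n1 \<Longrightarrow> A $$ (a,b) = (\<Sum>k<n1. complex_of_real (\<alpha> k) * U $$ (a,k) * cnj (U $$ (b,k)))"
    using Ae0 by blast
  from psd_gram[OF B] obtain V \<beta> where be0: "\<forall>k<n2. \<beta> k \<ge> 0"
    and Be0: "\<forall>a<n2. \<forall>b<n2. B $$ (a,b) = (\<Sum>k<n2. complex_of_real (\<beta> k) * V $$ (a,k) * cnj (V $$ (b,k)))"
    by blast
  have be: "\<And>k. k < n2 \<Longrightarrow> \<beta> k \<ge> 0" using be0 by blast
  have Be: "\<And>a b. a < n2 \<Longrightarrow> b < n2 \<Longrightarrow> B $$ (a,b) = (\<Sum>k<n2. complex_of_real (\<beta> k) * V $$ (a,k) * cnj (V $$ (b,k)))"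
    using Be0 by blast
  show ?thesis
  proof (rule gram_psd[where K="{..<n1} \<times> {..<n2}" and c="\<lambda>(k1,k2). \<alpha> k1 * \<beta> k2"
        and w="\<lambda>(k1,k2) a. U $$ (a div n2, k1) * V $$ (a mod n2, k2)"])
    show "kron A B \<in> carrier_mat (n1*n2) (n1*n2)" by (rule kron_carrier[OF Ac Bc])
    show "finite ({..<n1} \<times> {..<n2})" by simp
    show "\<And>k. k \<in> {..<n1} \<times> {..<n2} \<Longrightarrow> 0 \<le> (case k of (k1, k2) \<Rightarrow> \<alpha> k1 * \<beta> k2)"
      using al be by auto
    fix a b assume a: "a < n1*n2" and b: "b < n1*n2"
    note ab = div_mod_bounds[OF a] div_mod_bounds[OF b]
    have "kron A B $$ (a,b) = A $$ (a div n2, b div n2) * B $$ (a mod n2, b mod n2)" by (rule kron_entry[OF Ac Bc a b])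
    also have "\<dots> = (\<Sum>k1<n1. complex_of_real (\<alpha> k1) * U $$ (a div n2,k1) * cnj (U $$ (b div n2,k1))) *
        (\<Sum>k2<n2. complex_of_real (\<beta> k2) * V $$ (a mod n2,k2) * cnj (V $$ (b mod n2,k2)))"
      using ab by (simp add: Ae Be)
    also have "\<dots> = (\<Sum>k1<n1. \<Sum>k2<n2. (complex_of_real (\<alpha> k1) * U $$ (a div n2,k1) * cnj (U $$ (b div n2,k1))) *
        (complex_of_real (\<beta> k2) * V $$ (a mod n2,k2) * cnj (V $$ (b mod n2,k2))))"
      by (rule sum_product)
    also have "\<dots> = (\<Sum>(k1,k2)\<in>{..<n1} \<times> {..<n2}. (complex_of_real (\<alpha> k1) * U $$ (a div n2,k1) * cnj (U $$ (b div n2,k1))) *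
        (complex_of_real (\<beta> k2) * V $$ (a mod n2,k2) * cnj (V $$ (b mod n2,k2))))"
      by (rule sum.cartesian_product)
    also have "\<dots> = (\<Sum>k\<in>{..<n1} \<times> {..<n2}. complex_of_real (case k of (k1, k2) \<Rightarrow> \<alpha> k1 * \<beta> k2) *
          (case k of (k1, k2) \<Rightarrow> \<lambda>a. U $$ (a div n2, k1) * V $$ (a mod n2, k2)) a *
          cnj ((case k of (k1, k2) \<Rightarrow> \<lambda>a. U $$ (a div n2, k1) * V $$ (a mod n2, k2)) b))"
      by (intro sum.cong refl) (auto simp: mult_ac)
    finally show "kron A B $$ (a,b) = (\<Sum>k\<in>{..<n1} \<times> {..<n2}. complex_of_real (case k of (k1, k2) \<Rightarrow> \<alpha> k1 * \<beta> k2) *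
          (case k of (k1, k2) \<Rightarrow> \<lambda>a. U $$ (a div n2, k1) * V $$ (a mod n2, k2)) a *
          cnj ((case k of (k1, k2) \<Rightarrow> \<lambda>a. U $$ (a div n2, k1) * V $$ (a mod n2, k2)) b))" .
  qed
qed

lemma kron_trace:
  assumes A: "A \<in> carrier_mat n1 n1" and B: "B \<in> carrier_mat n2 n2"
  shows "mtrace (kron A B) = mtrace A * mtrace B"
proof -
  have "mtrace (kron A B) = (\<Sum>i<n1*n2. kron A B $$ (i,i))" by (rule mtrace_carrier[OF kron_carrier[OF A B]])
  also have "\<dots> = (\<Sum>a<n1. \<Sum>b<n2. kron A B $$ (a*n2+b, a*n2+b))" by (rule sum_split_mult)
  also have "\<dots> = (\<Sum>a<n1. \<Sum>b<n2. A $$ (a,a) * B $$ (b,b))"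
  proof (intro sum.cong refl)
    fix a b assume a: "a \<in> {..<n1}" and b: "b \<in> {..<n2}"
    have lt: "a*n2+b < n1*n2" using a b
      by (metis lessThan_iff add.commute add_less_cancel_left less_le_trans mult.commute mult_le_mono1 not_less_eq_eq Suc_leI mult_Suc_right)
    show "kron A B $$ (a*n2+b, a*n2+b) = A $$ (a,a) * B $$ (b,b)"
      unfolding kron_entry[OF A B lt lt] using b by simp
  qed
  also have "\<dots> = mtrace A * mtrace B" by (simp add: sum_product mtrace_carrier[OF A] mtrace_carrier[OF B])
  finally show ?thesis .
qed

lemma kl_carrier: "(\<And>F. F \<in> set Fs \<Longrightarrow> F \<in> carrier_mat d d) \<Longrightarrow> kron_list Fs \<in> carrier_mat (d ^ length Fs) (d ^ length Fs)"
proof (induction Fs)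
  case Nil
  then show ?case by simp
next
  case (Cons F Fs)
  have "kron F (kron_list Fs) \<in> carrier_mat (d * d ^ length Fs) (d * d ^ length Fs)"
    by (rule kron_carrier) (use Cons in auto)
  thus ?case by simp
qed

lemma one1_psd: "psd_mat 1 (1\<^sub>m 1)"
  by (rule gram_psd[where K="{0::nat}" and c="\<lambda>_. 1" and w="\<lambda>_ _. 1"]) auto

lemma kl_psd: "(\<And>F. F \<in> set Fs \<Longrightarrow> psd_mat d F) \<Longrightarrow> psd_mat (d ^ length Fs) (kron_list Fs)"
proof (induction Fs)
  case Nil
  then show ?case using one1_psd by simp
next
  case (Cons F Fs)
  have "psd_mat (d * d ^ length Fs) (kron F (kron_list Fs))"
    by (rule kron_psd) (use Cons in auto)
  thus ?case by simp
qed

lemma kl_trace: "(\<And>F. F \<in> set Fs \<Longrightarrow> F \<in> carrier_mat d d \<and> mtrace F = 1) \<Longrightarrow> mtrace (kron_list Fs) = 1"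
proof (induction Fs)
  case Nil
  then show ?case by (simp add: mtrace_def)
next
  case (Cons F Fs)
  have F: "F \<in> carrier_mat d d" "mtrace F = 1" using Cons.prems by auto
  have K: "kron_list Fs \<in> carrier_mat (d ^ length Fs) (d ^ length Fs)"
    by (rule kl_carrier) (use Cons.prems in auto)
  have "mtrace (kron F (kron_list Fs)) = mtrace F * mtrace (kron_list Fs)" by (rule kron_trace[OF F(1) K])
  thus ?case using F Cons by simp
qed

lemma ket_carrier: "ket_bra2 i \<in> carrier_mat 2 2"
  unfolding ket_bra2_def by simp

lemma ket_entry: "j < 2 \<Longrightarrow> k < 2 \<Longrightarrow> ket_bra2 i $$ (j,k) = (if j = i \<and> k = i then 1 else 0)"
  unfolding ket_bra2_def by simp

lemma ket_psd: "psd_mat 2 (ket_bra2 i)"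
  by (rule gram_psd[where K="{0::nat}" and c="\<lambda>_. 1" and w="\<lambda>_ a. if a = i then 1 else 0"])
     (auto simp: ket_carrier ket_entry)

lemma ket_trace: "i < 2 \<Longrightarrow> mtrace (ket_bra2 i) = 1"
  unfolding mtrace_carrier[OF ket_carrier] by (auto simp: ket_entry numeral_2_eq_2 lessThan_Suc)

lemma psd_smult:
  assumes c: "c \<ge> 0" and X: "psd_mat N X"
  shows "psd_mat N (complex_of_real c \<cdot>\<^sub>m X)"
proof -
  have Xc: "X \<in> carrier_mat N N" using X psd_herm herm_carrier by blast
  from psd_gram[OF X] obtain U \<alpha> where al: "\<forall>k<N. \<alpha> k \<ge> 0"
    and Xe: "\<forall>a<N. \<forall>b<N. X $$ (a,b) = (\<Sum>k<N. complex_of_real (\<alpha> k) * U $$ (a,k) * cnj (U $$ (b,k)))"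
    by blast
  show ?thesis
  proof (rule gram_psd[where K="{..<N}" and c="\<lambda>k. c * \<alpha> k" and w="\<lambda>k a. U $$ (a,k)"])
    show "complex_of_real c \<cdot>\<^sub>m X \<in> carrier_mat N N" using Xc by simp
    show "finite {..<N}" by simp
    show "\<And>k. k \<in> {..<N} \<Longrightarrow> 0 \<le> c * \<alpha> k" using al c by simp
    fix a b assume a: "a < N" and b: "b < N"
    have "(complex_of_real c \<cdot>\<^sub>m X) $$ (a,b) = complex_of_real c * X $$ (a,b)" using Xc a b by (simp add: carrier_matD)
    also have "\<dots> = (\<Sum>k<N. complex_of_real (c * \<alpha> k) * U $$ (a,k) * cnj (U $$ (b,k)))"
      using Xe a b by (simp add: sum_distrib_left mult_ac)
    finally show "(complex_of_real c \<cdot>\<^sub>m X) $$ (a,b) = (\<Sum>k<N. complex_of_real (c * \<alpha> k) * U $$ (a,k) * cnj (U $$ (b,k)))" .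
  qed
qed

fun num :: "nat \<Rightarrow> nat \<Rightarrow> (nat \<Rightarrow> nat) \<Rightarrow> nat" where
  "num d 0 h = 0"
| "num d (Suc m) h = h 0 * d ^ m + num d m (\<lambda>k. h (Suc k))"

definition dg :: "nat \<Rightarrow> nat \<Rightarrow> nat \<Rightarrow> nat \<Rightarrow> nat" where
  "dg d n k a = a div d ^ (n - 1 - k) mod d"

lemma divmod_aux: "r < (D::nat) \<Longrightarrow> (q * D + r) div D = q" "r < (D::nat) \<Longrightarrow> (q * D + r) mod D = r"
  by simp_all

lemma num_cong: "(\<And>k. k < n \<Longrightarrow> h k = h' k) \<Longrightarrow> num d n h = num d n h'"
proof (induction n arbitrary: h h')
  case 0 thus ?case by simp
next
  case (Suc m)
  have "num d m (\<lambda>k. h (Suc k)) = num d m (\<lambda>k. h' (Suc k))" by (rule Suc.IH) (use Suc.prems in simp)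
  thus ?case using Suc.prems[of 0] by simp
qed

lemma dpos: "a < d ^ Suc m \<Longrightarrow> 0 < (d::nat)"
  by (cases d) auto

lemma dg_Suc0: assumes "a < d ^ Suc m" shows "dg d (Suc m) 0 a = a div d ^ m"
proof -
  have "a div d ^ m < d" using assms by (simp add: less_mult_imp_div_less mult.commute)
  thus ?thesis unfolding dg_def by simp
qed

lemma dg_SucSuc: assumes k: "k < m" shows "dg d (Suc m) (Suc k) a = dg d m k (a mod d ^ m)"
proof -
  define j where "j = m - 1 - k"
  have jm: "j < m" and ej: "m = j + (m - j)" and mj: "m - j \<ge> 1" using k unfolding j_def by auto
  have "(a mod d ^ m) div d ^ j mod d = a div d ^ j mod d"
  proof (cases "d = 0")
    case True
    then show ?thesis using jm by (cases j) (auto simp: zero_power)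
  next
    case False
    have dm: "d ^ m = d ^ j * d ^ (m - j)" by (metis ej power_add)
    have "(a mod d ^ m) div d ^ j = (d ^ j * (a div d ^ j mod d ^ (m - j)) + a mod d ^ j) div d ^ j"
      unfolding dm mod_mult2_eq ..
    also have "\<dots> = a div d ^ j mod d ^ (m - j)" using False by simp
    finally have "(a mod d ^ m) div d ^ j mod d = a div d ^ j mod d ^ (m - j) mod d" by simp
    also have "\<dots> = a div d ^ j mod d" proof (rule mod_mod_cancel)
      have "0 < m - j" using mj by simp
      thus "d dvd d ^ (m - j)" by (intro dvd_power) simp
    qed
    finally show ?thesis .
  qed
  thus ?thesis unfolding dg_def j_def by simp
qed

lemma num_bound: "(\<And>k. k < n \<Longrightarrow> h k < d) \<Longrightarrow> num d n h < d ^ n"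
proof (induction n arbitrary: h)
  case 0 thus ?case by simp
next
  case (Suc m)
  have r: "num d m (\<lambda>k. h (Suc k)) < d ^ m" by (rule Suc.IH) (use Suc.prems in simp)
  have h0: "h 0 + 1 \<le> d" using Suc.prems[of 0] by simp
  have "num d (Suc m) h < h 0 * d ^ m + d ^ m" using r by simp
  also have "\<dots> = (h 0 + 1) * d ^ m" by simp
  also have "\<dots> \<le> d * d ^ m" using h0 by (rule mult_right_mono) simp
  finally show ?case by simp
qed

lemma dg_num: "(\<And>k. k < n \<Longrightarrow> h k < d) \<Longrightarrow> k < n \<Longrightarrow> dg d n k (num d n h) = h k"
proof (induction n arbitrary: h k)
  case 0 thus ?case by simp
next
  case (Suc m)
  define r where "r = num d m (\<lambda>k. h (Suc k))"
  have r: "r < d ^ m" unfolding r_def by (rule num_bound) (use Suc.prems in simp)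
  have a: "num d (Suc m) h < d ^ Suc m" by (rule num_bound) (use Suc.prems in simp)
  have ad: "num d (Suc m) h div d ^ m = h 0" using divmod_aux(1)[OF r, of "h 0"] by (simp add: r_def)
  have am: "num d (Suc m) h mod d ^ m = r" using divmod_aux(2)[OF r, of "h 0"] by (simp add: r_def)
  show ?case
  proof (cases k)
    case 0 thus ?thesis using dg_Suc0[OF a] ad by simp
  next
    case (Suc k')
    have k': "k' < m" using Suc.prems(2) Suc by simp
    have "dg d (Suc m) (Suc k') (num d (Suc m) h) = dg d m k' r" using dg_SucSuc[OF k'] am by simp
    also have "\<dots> = h (Suc k')" unfolding r_def by (rule Suc.IH) (use Suc.prems k' in simp_all)
    finally show ?thesis using Suc by simp
  qed
qed

lemma num_dg: "a < d ^ n \<Longrightarrow> num d n (\<lambda>k. dg d n k a) = a"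
proof (induction n arbitrary: a)
  case 0 thus ?case by simp
next
  case (Suc m)
  have dp: "0 < d" using dpos[OF Suc.prems] .
  have am: "a mod d ^ m < d ^ m" using dp by simp
  have "num d (Suc m) (\<lambda>k. dg d (Suc m) k a) = dg d (Suc m) 0 a * d ^ m + num d m (\<lambda>k. dg d (Suc m) (Suc k) a)"
    by simp
  also have "num d m (\<lambda>k. dg d (Suc m) (Suc k) a) = num d m (\<lambda>k. dg d m k (a mod d ^ m))"
    by (rule num_cong) (simp add: dg_SucSuc)
  also have "\<dots> = a mod d ^ m" by (rule Suc.IH[OF am])
  also have "dg d (Suc m) 0 a = a div d ^ m" by (rule dg_Suc0[OF Suc.prems])
  finally show ?case using div_mult_mod_eq[of a "d ^ m"] by simp
qed

lemma dg_lt: "0 < d \<Longrightarrow> dg d n k a < d"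
  unfolding dg_def by simp

lemma kl_entry:
  assumes "\<And>F. F \<in> set Fs \<Longrightarrow> F \<in> carrier_mat d d" and "a < d ^ length Fs" and "b < d ^ length Fs"
  shows "kron_list Fs $$ (a,b) = (\<Prod>k<length Fs. (Fs!k) $$ (dg d (length Fs) k a, dg d (length Fs) k b))"
  using assms
proof (induction Fs arbitrary: a b)
  case Nil thus ?case by simp
next
  case (Cons F Fs)
  define m where "m = length Fs"
  have F: "F \<in> carrier_mat d d" using Cons.prems by simp
  have K: "kron_list Fs \<in> carrier_mat (d ^ m) (d ^ m)" unfolding m_def by (rule kl_carrier) (use Cons.prems in simp)
  have a: "a < d * d ^ m" and b: "b < d * d ^ m" using Cons.prems m_def by simp_all
  have a': "a < d ^ Suc m" and b': "b < d ^ Suc m" using a b by simp_all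
  have dp: "0 < d" using dpos[OF a'] .
  have am: "a mod d ^ m < d ^ m" and bm: "b mod d ^ m < d ^ m" using dp by simp_all
  have "kron_list (F # Fs) $$ (a,b) = F $$ (a div d ^ m, b div d ^ m) * kron_list Fs $$ (a mod d ^ m, b mod d ^ m)"
    using kron_entry[OF F K a b] by simp
  also have "kron_list Fs $$ (a mod d ^ m, b mod d ^ m) = (\<Prod>k<m. (Fs!k) $$ (dg d m k (a mod d ^ m), dg d m k (b mod d ^ m)))"
    unfolding m_def by (rule Cons.IH) (use Cons.prems am bm m_def in simp_all)
  also have "\<dots> = (\<Prod>k<m. ((F # Fs)!(Suc k)) $$ (dg d (Suc m) (Suc k) a, dg d (Suc m) (Suc k) b))"
    by (intro prod.cong refl) (simp add: dg_SucSuc)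
  also have "F $$ (a div d ^ m, b div d ^ m) = ((F # Fs)!0) $$ (dg d (Suc m) 0 a, dg d (Suc m) 0 b)"
    using dg_Suc0[OF a'] dg_Suc0[OF b'] by simp
  also have "((F # Fs)!0) $$ (dg d (Suc m) 0 a, dg d (Suc m) 0 b) *
      (\<Prod>k<m. ((F # Fs)!(Suc k)) $$ (dg d (Suc m) (Suc k) a, dg d (Suc m) (Suc k) b)) =
      (\<Prod>k<Suc m. ((F # Fs)!k) $$ (dg d (Suc m) k a, dg d (Suc m) k b))"
    by (rule prod.lessThan_Suc_shift[symmetric])
  finally have "kron_list (F # Fs) $$ (a,b) = (\<Prod>k<Suc m. ((F # Fs)!k) $$ (dg d (Suc m) k a, dg d (Suc m) k b))" .
  thus ?case unfolding m_def by simp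
qed

lemma kl_perm:
  fixes xs ys :: "'x list"
  assumes mset: "mset xs = mset ys"
  shows "\<exists>\<phi>. bij_betw \<phi> {..<d ^ length xs} {..<d ^ length xs} \<and>
     (\<forall>g::'x \<Rightarrow> complex mat. (\<forall>x. g x \<in> carrier_mat d d) \<longrightarrow>
       (\<forall>a<d ^ length xs. \<forall>b<d ^ length xs. kron_list (map g xs) $$ (a,b) = kron_list (map g ys) $$ (\<phi> a, \<phi> b)))"
proof -
  define n where "n = length xs"
  have len: "length ys = n" using mset_eq_length[OF mset] n_def by simp
  obtain \<pi> where pi: "bij_betw \<pi> {..<n} {..<n}" and xy: "\<forall>i<n. xs ! i = ys ! (\<pi> i)"
    using permutation_Ex_bij[OF mset] len n_def by auto
  show ?thesis
  proof (cases "d = 0")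
    case True
    show ?thesis
    proof (cases "n = 0")
      case True
      hence "xs = []" "ys = []" using len n_def by auto
      thus ?thesis by (auto intro: bij_betw_id)
    next
      case False
      hence z: "d ^ length xs = 0" using \<open>d = 0\<close> n_def by simp
      show ?thesis unfolding z by (rule exI[of _ id]) simp
    qed
  next
    case False
    hence dp: "0 < d" by simp
    define pinv where "pinv = inv_into {..<n} \<pi>"
    have pinv_pi: "pinv (\<pi> k) = k" if "k < n" for k
      unfolding pinv_def using pi that by (simp add: bij_betw_def inv_into_f_f)
    have pi_lt: "\<pi> k < n" if "k < n" for k using pi that by (auto simp: bij_betw_def)
    have pinv_bij: "bij_betw pinv {..<n} {..<n}" unfolding pinv_def by (rule bij_betw_inv_into[OF pi])
    have pinv_lt: "pinv j < n" if "j < n" for j using pinv_bij that by (auto simp: bij_betw_def)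
    define \<phi> where "\<phi> a = num d n (\<lambda>j. dg d n (pinv j) a)" for a
    have phi_lt: "\<phi> a < d ^ n" for a unfolding \<phi>_def by (rule num_bound) (simp add: dg_lt dp)
    have dg_phi: "dg d n j (\<phi> a) = dg d n (pinv j) a" if "j < n" for j a
      unfolding \<phi>_def by (rule dg_num) (simp_all add: dg_lt dp that)
    have inj: "inj_on \<phi> {..<d ^ n}"
    proof (rule inj_onI)
      fix a a' assume a: "a \<in> {..<d ^ n}" and a': "a' \<in> {..<d ^ n}" and e: "\<phi> a = \<phi> a'"
      have "dg d n k a = dg d n k a'" if k: "k < n" for k
        using dg_phi[OF pi_lt[OF k], of a] dg_phi[OF pi_lt[OF k], of a'] e pinv_pi[OF k] by simp
      hence "num d n (\<lambda>k. dg d n k a) = num d n (\<lambda>k. dg d n k a')" by (rule num_cong)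
      thus "a = a'" using num_dg[of a d n] num_dg[of a' d n] a a' by simp
    qed
    have bij: "bij_betw \<phi> {..<d ^ n} {..<d ^ n}"
      unfolding bij_betw_def using inj endo_inj_surj[OF _ _ inj] phi_lt by auto
    have ent: "kron_list (map g xs) $$ (a,b) = kron_list (map g ys) $$ (\<phi> a, \<phi> b)"
      if g: "\<forall>x. g x \<in> carrier_mat d d" and a: "a < d ^ n" and b: "b < d ^ n" for g a b
    proof -
      have "kron_list (map g xs) $$ (a,b) = (\<Prod>k<length (map g xs). (map g xs!k) $$ (dg d (length (map g xs)) k a, dg d (length (map g xs)) k b))"
        by (rule kl_entry) (use g a b n_def in auto)
      also have "\<dots> = (\<Prod>k<n. g (xs!k) $$ (dg d n k a, dg d n k b))" using n_def by simp
      finally have "kron_list (map g xs) $$ (a,b) = (\<Prod>k<n. g (xs!k) $$ (dg d n k a, dg d n k b))" .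
      also have "\<dots> = (\<Prod>k<n. g (ys!(\<pi> k)) $$ (dg d n (pinv (\<pi> k)) a, dg d n (pinv (\<pi> k)) b))"
        by (intro prod.cong refl) (simp add: xy pinv_pi)
      also have "\<dots> = (\<Prod>j<n. g (ys!j) $$ (dg d n (pinv j) a, dg d n (pinv j) b))"
        by (rule prod.reindex_bij_betw[OF pi])
      also have "\<dots> = (\<Prod>j<n. g (ys!j) $$ (dg d n j (\<phi> a), dg d n j (\<phi> b)))"
        by (intro prod.cong refl) (simp add: dg_phi)
      also have "\<dots> = (\<Prod>k<length (map g ys). (map g ys!k) $$ (dg d (length (map g ys)) k (\<phi> a), dg d (length (map g ys)) k (\<phi> b)))"
        using len by simp
      also have "\<dots> = kron_list (map g ys) $$ (\<phi> a, \<phi> b)"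
        by (rule kl_entry[symmetric]) (use g phi_lt len in auto)
      finally show ?thesis .
    qed
    show ?thesis using bij ent n_def by blast
  qed
qed

lemma wedge_trace:
  assumes A: "A \<in> carrier_mat N N" and B: "B \<in> carrier_mat N N" and H: "hermitian_mat N (A - B)"
  shows "Re (mtrace (mat_wedge N A B)) = (Re (mtrace A) + Re (mtrace B) - Re (mtrace (mat_abs N (A - B)))) / 2"
proof -
  have Ab: "mat_abs N (A - B) \<in> carrier_mat N N" by (rule abs_carrier[OF H])
  have AB: "A + B \<in> carrier_mat N N" using B by (rule add_carrier_mat)
  have "mtrace (mat_wedge N A B) = (1/2) * mtrace (A + B - mat_abs N (A - B))"
    unfolding mat_wedge_def by (rule mtrace_smult[OF minus_carrier_mat[OF Ab]])
  also have "mtrace (A + B - mat_abs N (A - B)) = mtrace (A + B) - mtrace (mat_abs N (A - B))"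
    by (rule mtrace_minus[OF AB Ab])
  also have "mtrace (A + B) = mtrace A + mtrace B" by (rule mtrace_plus[OF A B])
  finally have "mtrace (mat_wedge N A B) = (1/2) * (mtrace A + mtrace B - mtrace (mat_abs N (A - B)))" .
  hence "Re (mtrace (mat_wedge N A B)) = Re ((1/2) * (mtrace A + mtrace B - mtrace (mat_abs N (A - B))))" by (rule arg_cong)
  also have "\<dots> = (Re (mtrace A) + Re (mtrace B) - Re (mtrace (mat_abs N (A - B)))) / 2" by simp
  finally show ?thesis .
qed

lemma V_facts:
  assumes chan: "is_cq_channel d W" and len: "length xs = n" and i: "i < 2"
  shows "psd_mat (d ^ n * 2) (tensor_channel_I2 W (xs, i))" "mtrace (tensor_channel_I2 W (xs, i)) = 1"
proof -
  have Wx: "psd_mat d (W x)" "mtrace (W x) = 1" for x using chan unfolding is_cq_channel_def density_ops_def by auto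
  have Wc: "W x \<in> carrier_mat d d" for x using Wx(1) psd_herm herm_carrier by blast
  have KL: "psd_mat (d ^ length (map W xs)) (kron_list (map W xs))" by (rule kl_psd) (use Wx in auto)
  have KLc: "kron_list (map W xs) \<in> carrier_mat (d ^ length (map W xs)) (d ^ length (map W xs))"
    by (rule kl_carrier) (use Wc in auto)
  have KLt: "mtrace (kron_list (map W xs)) = 1" by (rule kl_trace) (use Wx Wc in auto)
  show "psd_mat (d ^ n * 2) (tensor_channel_I2 W (xs, i))"
    unfolding tensor_channel_I2_def using kron_psd[OF KL ket_psd] len by simp
  show "mtrace (tensor_channel_I2 W (xs, i)) = 1"
    unfolding tensor_channel_I2_def using kron_trace[OF KLc ket_carrier] KLt ket_trace[OF i] by simp
qed

lemma KLW_facts: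
  assumes chan: "is_cq_channel d W" and len: "length ys = n"
  shows "psd_mat (d ^ n) (kron_list (map W ys))" "mtrace (kron_list (map W ys)) = 1"
proof -
  have Wx: "psd_mat d (W x)" "mtrace (W x) = 1" for x using chan unfolding is_cq_channel_def density_ops_def by auto
  have Wc: "W x \<in> carrier_mat d d" for x using Wx(1) psd_herm herm_carrier by blast
  have KL: "psd_mat (d ^ length (map W ys)) (kron_list (map W ys))" by (rule kl_psd) (use Wx in auto)
  thus "psd_mat (d ^ n) (kron_list (map W ys))" using len by simp
  show "mtrace (kron_list (map W ys)) = 1" by (rule kl_trace) (use Wx Wc in auto)
qed

lemma Y_facts:
  assumes sig: "\<sigma> \<in> density_ops d" and c: "c \<ge> 0"
  shows "psd_mat (d ^ n) (complex_of_real c \<cdot>\<^sub>m kron_list (replicate n \<sigma>))"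
    "mtrace (complex_of_real c \<cdot>\<^sub>m kron_list (replicate n \<sigma>)) = complex_of_real c"
proof -
  have s: "psd_mat d \<sigma>" "mtrace \<sigma> = 1" using sig unfolding density_ops_def by auto
  have sc: "\<sigma> \<in> carrier_mat d d" using s(1) psd_herm herm_carrier by blast
  have KL: "psd_mat (d ^ length (replicate n \<sigma>)) (kron_list (replicate n \<sigma>))" by (rule kl_psd) (use s in auto)
  have KLc: "kron_list (replicate n \<sigma>) \<in> carrier_mat (d ^ n) (d ^ n)"
    using kl_carrier[of "replicate n \<sigma>" d] sc by simp
  have KLt: "mtrace (kron_list (replicate n \<sigma>)) = 1" by (rule kl_trace) (use s sc in auto)
  show "psd_mat (d ^ n) (complex_of_real c \<cdot>\<^sub>m kron_list (replicate n \<sigma>))"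
    using psd_smult[OF c KL] by simp
  show "mtrace (complex_of_real c \<cdot>\<^sub>m kron_list (replicate n \<sigma>)) = complex_of_real c"
    using mtrace_smult[OF KLc] KLt by simp
qed

lemma class_abs:
  fixes W :: "'x \<Rightarrow> complex mat"
  assumes chan: "is_cq_channel d W" and lx: "length xs = n" and ly: "length ys = n"
    and ms: "mset ys = mset xs" and i0: "i0 < 2" and sig: "\<sigma> \<in> density_ops d" and c: "c \<ge> 0"
  shows "Re (mtrace (mat_abs (d^n*2) (tensor_channel_I2 W (xs,i0) - kron (complex_of_real c \<cdot>\<^sub>m kron_list (replicate n \<sigma>)) (ket_bra2 i0))))
     \<le> Re (mtrace (mat_abs (d^n) (kron_list (map W ys) - complex_of_real c \<cdot>\<^sub>m kron_list (replicate n \<sigma>))))"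
proof -
  define N where "N = d ^ n"
  define Y where "Y = complex_of_real c \<cdot>\<^sub>m kron_list (replicate n \<sigma>)"
  define Kx where "Kx = kron_list (map W xs)"
  define Ky where "Ky = kron_list (map W ys)"
  define S where "S = kron_list (replicate n \<sigma>)"
  have Wx: "psd_mat d (W x)" for x using chan unfolding is_cq_channel_def density_ops_def by auto
  have Wc: "W x \<in> carrier_mat d d" for x using Wx psd_herm herm_carrier by blast
  have sp: "psd_mat d \<sigma>" using sig unfolding density_ops_def by auto
  have sc: "\<sigma> \<in> carrier_mat d d" using sp psd_herm herm_carrier by blast
  obtain \<phi> where bij: "bij_betw \<phi> {..<d ^ length ys} {..<d ^ length ys}"
    and perm: "\<forall>g::'x \<Rightarrow> complex mat. (\<forall>x. g x \<in> carrier_mat d d) \<longrightarrow>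
       (\<forall>a<d ^ length ys. \<forall>b<d ^ length ys. kron_list (map g ys) $$ (a,b) = kron_list (map g xs) $$ (\<phi> a, \<phi> b))"
    using kl_perm[OF ms, of d] by blast
  have bijN: "bij_betw \<phi> {..<N} {..<N}" using bij ly N_def by simp
  have phiN: "\<phi> a < N" if "a < N" for a using bijN that by (auto simp: bij_betw_def)
  have eK: "Ky $$ (a,b) = Kx $$ (\<phi> a, \<phi> b)" if "a < N" "b < N" for a b
    using perm Wc that ly N_def unfolding Kx_def Ky_def by auto
  have eS: "S $$ (a,b) = S $$ (\<phi> a, \<phi> b)" if "a < N" "b < N" for a b
  proof -
    have "kron_list (map (\<lambda>_. \<sigma>) ys) $$ (a,b) = kron_list (map (\<lambda>_. \<sigma>) xs) $$ (\<phi> a, \<phi> b)"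
      using perm sc that ly N_def by auto
    thus ?thesis unfolding S_def using lx ly by (simp add: map_replicate_const)
  qed
  have Kxc: "Kx \<in> carrier_mat N N" unfolding Kx_def N_def using kl_carrier[of "map W xs" d] Wc lx by auto
  have Kyc: "Ky \<in> carrier_mat N N" unfolding Ky_def N_def using kl_carrier[of "map W ys" d] Wc ly by auto
  have Sc: "S \<in> carrier_mat N N" unfolding S_def N_def using kl_carrier[of "replicate n \<sigma>" d] sc by auto
  have Yc: "Y \<in> carrier_mat N N" unfolding Y_def using Sc S_def by simp
  have eY: "Y $$ (a,b) = Y $$ (\<phi> a, \<phi> b)" if "a < N" "b < N" for a b
    unfolding Y_def S_def[symmetric] using eS[OF that] that phiN[OF that(1)] phiN[OF that(2)] Sc by (simp add: carrier_matD)
  have Vd: "tensor_channel_I2 W (xs,i0) = kron Kx (ket_bra2 i0)" unfolding tensor_channel_I2_def Kx_def by simp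
  define X where "X = kron Kx (ket_bra2 i0) - kron Y (ket_bra2 i0)"
  have KXc: "kron Kx (ket_bra2 i0) \<in> carrier_mat (N*2) (N*2)" by (rule kron_carrier[OF Kxc ket_carrier])
  have KYc: "kron Y (ket_bra2 i0) \<in> carrier_mat (N*2) (N*2)" by (rule kron_carrier[OF Yc ket_carrier])
  have Xe: "X $$ (a',b') = (Kx $$ (a' div 2, b' div 2) - Y $$ (a' div 2, b' div 2)) * ket_bra2 i0 $$ (a' mod 2, b' mod 2)"
    if a': "a' < N*2" and b': "b' < N*2" for a' b'
    unfolding X_def minus_entry[OF KXc KYc a' b'] kron_entry[OF Kxc ket_carrier a' b'] kron_entry[OF Yc ket_carrier a' b']
    by (simp add: algebra_simps)
  have VP: "psd_mat (N*2) (kron Kx (ket_bra2 i0))" using V_facts(1)[OF chan lx i0] Vd N_def by simp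
  have YP: "psd_mat N Y" unfolding Y_def N_def by (rule Y_facts(1)[OF sig c])
  have BP: "psd_mat (N*2) (kron Y (ket_bra2 i0))" by (rule kron_psd[OF YP ket_psd])
  have XH: "hermitian_mat (N*2) X" unfolding X_def by (rule hermitian_diff[OF psd_herm[OF VP] psd_herm[OF BP]])
  have KyP: "psd_mat N Ky" unfolding Ky_def N_def by (rule KLW_facts(1)[OF chan ly])
  have ZH: "hermitian_mat N (Ky - Y)" by (rule hermitian_diff[OF psd_herm[OF KyP] psd_herm[OF YP]])
  define \<psi> where "\<psi> a = \<phi> a * 2 + i0" for a
  have inj: "inj_on \<psi> {..<N}"
  proof (rule inj_onI)
    fix a b assume "a \<in> {..<N}" "b \<in> {..<N}" "\<psi> a = \<psi> b"
    hence "\<phi> a = \<phi> b" "a \<in> {..<N}" "b \<in> {..<N}" unfolding \<psi>_def by auto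
    thus "a = b" using bijN unfolding bij_betw_def inj_on_def by blast
  qed
  have psi_lt: "\<psi> a < N*2" if "a < N" for a using phiN[OF that] i0 unfolding \<psi>_def by simp
  have img: "\<psi> ` {..<N} \<subseteq> {..<N*2}" using psi_lt by auto
  have psi_div: "\<psi> a div 2 = \<phi> a" "\<psi> a mod 2 = i0" for a unfolding \<psi>_def using i0 by simp_all
  have XZ: "X $$ (\<psi> a, \<psi> b) = (Ky - Y) $$ (a,b)" if a: "a < N" and b: "b < N" for a b
  proof -
    have "X $$ (\<psi> a, \<psi> b) = Kx $$ (\<phi> a, \<phi> b) - Y $$ (\<phi> a, \<phi> b)"
      unfolding Xe[OF psi_lt[OF a] psi_lt[OF b]] psi_div using ket_entry i0 by simp
    also have "\<dots> = Ky $$ (a,b) - Y $$ (a,b)" using eK[OF a b] eY[OF a b] by simp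
    also have "\<dots> = (Ky - Y) $$ (a,b)" using minus_entry[OF Kyc Yc a b] by simp
    finally show ?thesis .
  qed
  have inimg: "a' \<in> \<psi> ` {..<N}" if a': "a' < N*2" and m: "a' mod 2 = i0" for a'
  proof -
    have "a' div 2 < N" using a' by simp
    then obtain c' where c': "c' < N" "\<phi> c' = a' div 2" using bijN unfolding bij_betw_def by (metis imageE lessThan_iff)
    have "\<psi> c' = a'" unfolding \<psi>_def c'(2) using m div_mult_mod_eq[of a' 2] by simp
    thus ?thesis using c' by auto
  qed
  have X0: "X $$ (a',b') = 0" if a': "a' < N*2" and b': "b' < N*2" and n: "a' \<notin> \<psi> ` {..<N} \<or> b' \<notin> \<psi> ` {..<N}" for a' b'
  proof -
    have "a' mod 2 \<noteq> i0 \<or> b' mod 2 \<noteq> i0" using n inimg a' b' by blast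
    hence "ket_bra2 i0 $$ (a' mod 2, b' mod 2) = 0" using ket_entry by auto
    thus ?thesis unfolding Xe[OF a' b'] by simp
  qed
  have "Re (mtrace (mat_abs (N*2) X)) \<le> Re (mtrace (mat_abs N (Ky - Y)))"
    by (rule abs_embed[OF XH ZH inj img XZ X0])
  thus ?thesis unfolding X_def Vd[symmetric] N_def Y_def Ky_def .
qed

lemma sumB:
  assumes sum1: "mat D D (\<lambda>ij. \<Sum>x\<in>A. \<Lambda> x $$ ij) = 1\<^sub>m D"
    and Lc: "\<And>x. x \<in> A \<Longrightarrow> \<Lambda> x \<in> carrier_mat D D" and B: "B \<in> carrier_mat D D"
  shows "(\<Sum>x\<in>A. mtrace (\<Lambda> x * B)) = mtrace B"
proof -
  have L: "(\<Sum>x\<in>A. \<Lambda> x $$ (a,b)) = (if a = b then 1 else 0)" if "a < D" "b < D" for a b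
  proof -
    have "mat D D (\<lambda>ij. \<Sum>x\<in>A. \<Lambda> x $$ ij) $$ (a,b) = 1\<^sub>m D $$ (a,b)" using sum1 by simp
    thus ?thesis using that by simp
  qed
  have "(\<Sum>x\<in>A. mtrace (\<Lambda> x * B)) = (\<Sum>x\<in>A. \<Sum>a<D. \<Sum>b<D. \<Lambda> x $$ (a,b) * B $$ (b,a))"
  proof (rule sum.cong[OF refl])
    fix x assume x: "x \<in> A"
    show "mtrace (\<Lambda> x * B) = (\<Sum>a<D. \<Sum>b<D. \<Lambda> x $$ (a,b) * B $$ (b,a))"
      unfolding mtrace_carrier[OF mult_carrier_mat[OF Lc[OF x] B]]
      by (rule sum.cong[OF refl]) (simp add: mult_entry[OF Lc[OF x] B])
  qed
  also have "\<dots> = (\<Sum>a<D. \<Sum>b<D. \<Sum>x\<in>A. \<Lambda> x $$ (a,b) * B $$ (b,a))" by (rule swap3')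
  also have "\<dots> = (\<Sum>a<D. \<Sum>b<D. (\<Sum>x\<in>A. \<Lambda> x $$ (a,b)) * B $$ (b,a))" by (simp add: sum_distrib_right)
  also have "\<dots> = (\<Sum>a<D. \<Sum>b<D. if a = b then B $$ (a,a) else 0)"
    by (intro sum.cong refl) (simp add: L)
  also have "\<dots> = mtrace B" unfolding mtrace_carrier[OF B] by simp
  finally show ?thesis .
qed

lemma core:
  fixes W :: "'x \<Rightarrow> complex mat" and \<Lambda> :: "'x list \<times> nat \<Rightarrow> complex mat" and p :: "'x list \<times> nat \<Rightarrow> real"
  assumes chan: "is_cq_channel d W" and Mpos: "0 < M"
    and Ai: "\<And>xs i. (xs, i) \<in> A \<Longrightarrow> length xs = n \<and> i < 2"
    and sum1: "mat (d^n*2) (d^n*2) (\<lambda>ij. \<Sum>x\<in>A. \<Lambda> x $$ ij) = 1\<^sub>m (d^n*2)"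
    and lo: "\<forall>x\<in>A. p x \<ge> 0 \<and> loewner_le (d^n*2) (0\<^sub>m (d^n*2) (d^n*2)) (\<Lambda> x)
               \<and> loewner_le (d^n*2) (\<Lambda> x) (complex_of_real (p x) \<cdot>\<^sub>m 1\<^sub>m (d^n*2))"
    and sp: "(\<Sum>x\<in>A. p x) = M"
    and fin: "finite A" and CA: "C \<subseteq> A" and Ccl: "\<And>xs i. (xs, i) \<in> C \<Longrightarrow> i = i0 \<and> mset ys = mset xs"
    and ly: "length ys = n" and i0: "i0 < 2"
    and QC: "M * \<gamma> \<le> (\<Sum>x\<in>C. p x)" and gam: "0 \<le> \<gamma>"
    and sig: "\<sigma> \<in> density_ops d" and s: "0 \<le> s"
  shows "(1/M) * (\<Sum>x\<in>A. Re (mtrace (\<Lambda> x * tensor_channel_I2 W x))) \<le>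
     1 - (\<gamma> * Re (mtrace (mat_wedge (d^n) (kron_list (map W ys)) (complex_of_real (M*s) \<cdot>\<^sub>m kron_list (replicate n \<sigma>)))) - s)"
proof -
  define N where "N = d ^ n"
  define D where "D = N * 2"
  define c where "c = M * s"
  have c0: "0 \<le> c" unfolding c_def using Mpos s by simp
  define Y where "Y = complex_of_real c \<cdot>\<^sub>m kron_list (replicate n \<sigma>)"
  define B where "B = kron Y (ket_bra2 i0)"
  define Ky where "Ky = kron_list (map W ys)"
  have YP: "psd_mat N Y" unfolding Y_def N_def by (rule Y_facts(1)[OF sig c0])
  have Yt: "mtrace Y = complex_of_real c" unfolding Y_def by (rule Y_facts(2)[OF sig c0])
  have Yc: "Y \<in> carrier_mat N N" using YP psd_herm herm_carrier by blast
  have BP: "psd_mat D B" unfolding B_def D_def by (rule kron_psd[OF YP ket_psd])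
  have Bc: "B \<in> carrier_mat D D" using BP psd_herm herm_carrier by blast
  have Bt: "mtrace B = complex_of_real c" unfolding B_def using kron_trace[OF Yc ket_carrier] Yt ket_trace[OF i0] by simp
  have KyP: "psd_mat N Ky" unfolding Ky_def N_def by (rule KLW_facts(1)[OF chan ly])
  have Kyt: "mtrace Ky = 1" unfolding Ky_def by (rule KLW_facts(2)[OF chan ly])
  have Kyc: "Ky \<in> carrier_mat N N" using KyP psd_herm herm_carrier by blast
  have ZH: "hermitian_mat N (Ky - Y)" by (rule hermitian_diff[OF psd_herm[OF KyP] psd_herm[OF YP]])
  define t where "t = Re (mtrace (mat_abs N (Ky - Y)))"
  define F where "F = Re (mtrace (mat_wedge N Ky Y))"
  have Fe: "F = (1 + c - t) / 2" unfolding F_def t_def wedge_trace[OF Kyc Yc ZH] Kyt Yt by simp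
  have tle: "t \<le> 1 + c" unfolding t_def using psd_abs_le[OF KyP YP] Kyt Yt by simp
  have F0: "0 \<le> F" using Fe tle by simp
  define b where "b x = (if x \<in> C then p x * (1 - F) else p x)" for x
  have Lc: "\<Lambda> x \<in> carrier_mat D D" if "x \<in> A" for x
    using lo that unfolding loewner_le_def hermitian_mat_def D_def N_def by auto
  have bx: "Re (mtrace (\<Lambda> x * tensor_channel_I2 W x)) \<le> b x + Re (mtrace (\<Lambda> x * B))" if x: "x \<in> A" for x
  proof -
    obtain xs i where xd: "x = (xs, i)" by (cases x)
    have lx: "length xs = n" and i: "i < 2" using Ai x xd by auto
    define V where "V = tensor_channel_I2 W x"
    have VP: "psd_mat D V" unfolding V_def xd D_def N_def by (rule V_facts(1)[OF chan lx i])
    have Vt: "mtrace V = 1" unfolding V_def xd by (rule V_facts(2)[OF chan lx i])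
    have Vc: "V \<in> carrier_mat D D" using VP psd_herm herm_carrier by blast
    have px: "0 \<le> p x" and L0: "loewner_le D (0\<^sub>m D D) (\<Lambda> x)" and L1: "loewner_le D (\<Lambda> x) (complex_of_real (p x) \<cdot>\<^sub>m 1\<^sub>m D)"
      using lo x unfolding D_def N_def by auto
    have XH: "hermitian_mat D (V - B)" by (rule hermitian_diff[OF psd_herm[OF VP] psd_herm[OF BP]])
    have VBc: "V - B \<in> carrier_mat D D" using Bc by (rule minus_carrier_mat)
    have "\<Lambda> x * (V - B) = \<Lambda> x * V - \<Lambda> x * B" by (rule mult_minus_distrib_mat[OF Lc[OF x] Vc Bc])
    hence "mtrace (\<Lambda> x * (V - B)) = mtrace (\<Lambda> x * V) - mtrace (\<Lambda> x * B)"
      using mtrace_minus[OF mult_carrier_mat[OF Lc[OF x] Vc] mult_carrier_mat[OF Lc[OF x] Bc]] by simp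
    hence e1: "Re (mtrace (\<Lambda> x * V)) = Re (mtrace (\<Lambda> x * (V - B))) + Re (mtrace (\<Lambda> x * B))" by simp
    have e2: "Re (mtrace (\<Lambda> x * (V - B))) \<le> p x * (Re (mtrace (V - B)) + Re (mtrace (mat_abs D (V - B)))) / 2"
      by (rule loewner_trace[OF L0 L1 XH])
    have e3: "Re (mtrace (V - B)) = 1 - c" using mtrace_minus[OF Vc Bc] Vt Bt by simp
    have "Re (mtrace (\<Lambda> x * (V - B))) \<le> b x"
    proof (cases "x \<in> C")
      case True
      hence "i = i0" and ms: "mset ys = mset xs" using Ccl xd by auto
      have "Re (mtrace (mat_abs D (V - B))) \<le> t"
        unfolding V_def xd \<open>i = i0\<close> B_def Y_def t_def Ky_def Y_def D_def N_def c_def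
        by (rule class_abs[OF chan lx ly ms i0 sig]) (use c0 c_def in simp)
      hence "p x * (Re (mtrace (V - B)) + Re (mtrace (mat_abs D (V - B)))) / 2 \<le> p x * (1 - c + t) / 2"
        unfolding e3 using px by (simp add: mult_left_mono divide_right_mono)
      also have "1 - c + t = 2 * (1 - F)" using Fe by simp
      also have "p x * (2 * (1 - F)) / 2 = b x" unfolding b_def using True by simp
      finally show ?thesis using e2 by simp
    next
      case False
      have "Re (mtrace (mat_abs D (V - B))) \<le> 1 + c" using psd_abs_le[OF VP BP] Vt Bt by simp
      hence "p x * (Re (mtrace (V - B)) + Re (mtrace (mat_abs D (V - B)))) / 2 \<le> p x * (1 - c + (1 + c)) / 2"
        unfolding e3 using px by (simp add: mult_left_mono divide_right_mono)
      also have "\<dots> = b x" unfolding b_def using False by simp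
      finally show ?thesis using e2 by simp
    qed
    thus ?thesis using e1 unfolding V_def by simp
  qed
  have "(\<Sum>x\<in>A. Re (mtrace (\<Lambda> x * tensor_channel_I2 W x))) \<le> (\<Sum>x\<in>A. b x + Re (mtrace (\<Lambda> x * B)))"
    by (rule sum_mono) (rule bx)
  also have "\<dots> = (\<Sum>x\<in>A. b x) + Re (\<Sum>x\<in>A. mtrace (\<Lambda> x * B))" by (simp add: sum.distrib)
  also have "(\<Sum>x\<in>A. mtrace (\<Lambda> x * B)) = mtrace B"
    by (rule sumB[OF _ Lc Bc]) (use sum1 D_def N_def in simp_all)
  also have "(\<Sum>x\<in>A. b x) = (\<Sum>x\<in>A. p x) - F * (\<Sum>x\<in>C. p x)"
  proof -
    have "(\<Sum>x\<in>A. b x) = (\<Sum>x\<in>A. p x - (if x \<in> C then F * p x else 0))"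
      unfolding b_def by (intro sum.cong refl) (simp add: algebra_simps)
    also have "\<dots> = (\<Sum>x\<in>A. p x) - (\<Sum>x\<in>A. if x \<in> C then F * p x else 0)" by (simp add: sum_subtractf)
    also have "(\<Sum>x\<in>A. if x \<in> C then F * p x else 0) = (\<Sum>x\<in>C. F * p x)"
      using sum.inter_restrict[OF fin, of "\<lambda>x. F * p x" C] CA by (simp add: Int_absorb1 Int_commute)
    finally show ?thesis by (simp add: sum_distrib_left)
  qed
  finally have S: "(\<Sum>x\<in>A. Re (mtrace (\<Lambda> x * tensor_channel_I2 W x))) \<le> M - F * (\<Sum>x\<in>C. p x) + c"
    using sp Bt by simp
  have "F * (M * \<gamma>) \<le> F * (\<Sum>x\<in>C. p x)" using QC F0 by (rule mult_left_mono)
  hence "(\<Sum>x\<in>A. Re (mtrace (\<Lambda> x * tensor_channel_I2 W x))) \<le> M - F * (M * \<gamma>) + M * s"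
    using S c_def by simp
  hence "(1/M) * (\<Sum>x\<in>A. Re (mtrace (\<Lambda> x * tensor_channel_I2 W x))) \<le> (1/M) * (M - F * (M * \<gamma>) + M * s)"
    using Mpos by (simp add: divide_right_mono)
  also have "\<dots> = 1 - (\<gamma> * F - s)" using Mpos by (simp add: field_simps)
  finally show ?thesis unfolding F_def Ky_def Y_def c_def N_def .
qed

lemma psd_one: "psd_mat D (1\<^sub>m D)"
  by (rule gram_psd[where K="{..<D}" and c="\<lambda>_. 1" and w="\<lambda>k a. if a = k then 1 else 0"])
     (auto simp: if_distrib cong: if_cong)

lemma psd_scal: "0 \<le> c \<Longrightarrow> psd_mat D (complex_of_real c \<cdot>\<^sub>m 1\<^sub>m D)"
  by (rule psd_smult[OF _ psd_one])

lemma scal_minus: "complex_of_real a \<cdot>\<^sub>m 1\<^sub>m D - complex_of_real b \<cdot>\<^sub>m 1\<^sub>m D = complex_of_real (a - b) \<cdot>\<^sub>m 1\<^sub>m D"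
  by (rule eq_matI) (auto simp: algebra_simps)

lemma minus_zero_mat: "(X::complex mat) \<in> carrier_mat D D \<Longrightarrow> X - 0\<^sub>m D D = X"
  by (rule eq_matI) (simp_all add: carrier_matD)

lemma herm_zero: "hermitian_mat D (0\<^sub>m D D :: complex mat)"
  unfolding hermitian_mat_def by (auto intro!: eq_matI)

lemma S_nonempty:
  fixes A :: "'a set"
  assumes fin: "finite A" and ne: "A \<noteq> {}" and M: "1 \<le> M"
  shows "\<exists>v. v \<in> {(1 / M) * (\<Sum>x\<in>A. Re (mtrace (\<Lambda> x * V x))) | \<Lambda> p.
       mat D D (\<lambda>ij. \<Sum>x\<in>A. \<Lambda> x $$ ij) = 1\<^sub>m D \<and>
       (\<forall>x\<in>A. p x \<ge> 0 \<and> loewner_le D (0\<^sub>m D D) (\<Lambda> x)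
               \<and> loewner_le D (\<Lambda> x) (complex_of_real (p x) \<cdot>\<^sub>m 1\<^sub>m D)) \<and>
       (\<Sum>x\<in>A. p x) = M}"
proof -
  define k where "k = real (card A)"
  have k: "0 < k" unfolding k_def using fin ne by (simp add: card_gt_0_iff)
  define L where "L = (\<lambda>x::'a. complex_of_real (1/k) \<cdot>\<^sub>m 1\<^sub>m D)"
  define p where "p = (\<lambda>x::'a. M / k)"
  have sum1: "mat D D (\<lambda>ij. \<Sum>x\<in>A. L x $$ ij) = 1\<^sub>m D"
  proof (rule eq_matI)
    fix i j assume "i < dim_row (1\<^sub>m D)" "j < dim_col (1\<^sub>m D)"
    hence i: "i < D" and j: "j < D" by auto
    have "(\<Sum>x\<in>A. L x $$ (i,j)) = k * (if i = j then complex_of_real (1/k) else 0)"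
      unfolding L_def k_def using i j by simp
    thus "mat D D (\<lambda>ij. \<Sum>x\<in>A. L x $$ ij) $$ (i,j) = 1\<^sub>m D $$ (i,j)" using i j k by simp
  qed auto
  have Lc: "L x \<in> carrier_mat D D" for x unfolding L_def by simp
  have LP: "psd_mat D (L x)" for x unfolding L_def using k by (intro psd_scal) simp
  have herm: "hermitian_mat D (complex_of_real c \<cdot>\<^sub>m 1\<^sub>m D)" if "0 \<le> c" for c
    using psd_scal[OF that] by (rule psd_herm)
  have lo: "p x \<ge> 0 \<and> loewner_le D (0\<^sub>m D D) (L x) \<and> loewner_le D (L x) (complex_of_real (p x) \<cdot>\<^sub>m 1\<^sub>m D)" for x
  proof (intro conjI)
    show "p x \<ge> 0" unfolding p_def using M k by simp
    show "loewner_le D (0\<^sub>m D D) (L x)" unfolding loewner_le_def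
      using herm_zero psd_herm[OF LP] LP minus_zero_mat[OF Lc] by simp
    have "complex_of_real (p x) \<cdot>\<^sub>m 1\<^sub>m D - L x = complex_of_real (M / k - 1 / k) \<cdot>\<^sub>m 1\<^sub>m D"
      unfolding L_def p_def by (rule scal_minus)
    moreover have "0 \<le> M / k - 1 / k" using M k by (simp add: divide_right_mono diff_divide_distrib[symmetric])
    ultimately show "loewner_le D (L x) (complex_of_real (p x) \<cdot>\<^sub>m 1\<^sub>m D)" unfolding loewner_le_def
      using psd_herm[OF LP] herm[of "p x"] psd_scal[of "M / k - 1 / k" D] \<open>p x \<ge> 0\<close> by simp
  qed
  have sp: "(\<Sum>x\<in>A. p x) = M" unfolding p_def k_def using k k_def by simp
  show ?thesis using sum1 lo sp by blast
qed

lemma class_select: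
  fixes A :: "('x::finite list \<times> nat) set" and p :: "'x list \<times> nat \<Rightarrow> real"
  assumes Adef: "A = {xs. length xs = n} \<times> {0, 1}" and p0: "\<forall>x\<in>A. p x \<ge> 0" and sp: "(\<Sum>x\<in>A. p x) = M" and M: "0 < M"
  shows "\<exists>xs0 i0. (xs0, i0) \<in> A \<and>
     M / (2 * (real n + 1) ^ card (UNIV :: 'x set)) \<le> (\<Sum>x\<in>{x\<in>A. (count_list (fst x), snd x) = (count_list xs0, i0)}. p x)"
proof -
  define \<kappa> where "\<kappa> x = (count_list (fst x), snd x)" for x :: "'x list \<times> nat"
  define K where "K = \<kappa> ` A"
  have finA: "finite A"
  proof -
    have "{xs :: 'x list. length xs = n} = {xs. set xs \<subseteq> UNIV \<and> length xs = n}" by simp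
    hence "finite {xs :: 'x list. length xs = n}" using finite_lists_length_eq[OF finite_UNIV, of n] by simp
    thus ?thesis unfolding Adef by simp
  qed
  have Ane: "A \<noteq> {}" unfolding Adef by (auto intro!: exI[of _ "replicate n undefined"])
  have finK: "finite K" unfolding K_def using finA by simp
  have Kne: "K \<noteq> {}" unfolding K_def using Ane by simp
  have Ksub: "K \<subseteq> (Pi\<^sub>E UNIV (\<lambda>_. {..n})) \<times> {0, 1}"
  proof
    fix k assume "k \<in> K"
    then obtain xs i where xi: "(xs, i) \<in> A" and k: "k = \<kappa> (xs, i)" unfolding K_def by auto
    have "length xs = n" "i \<in> {0,1}" using xi Adef by auto
    hence "count_list xs \<in> Pi\<^sub>E UNIV (\<lambda>_. {..n})" using count_le_length[of xs] by (auto simp: PiE_UNIV_domain)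
    thus "k \<in> (Pi\<^sub>E UNIV (\<lambda>_. {..n})) \<times> {0, 1}" using k \<open>i \<in> {0,1}\<close> unfolding \<kappa>_def by simp
  qed
  have finP: "finite ((Pi\<^sub>E (UNIV :: 'x set) (\<lambda>_. {..n})) \<times> {0::nat, 1})" by (simp add: finite_PiE)
  have "card K \<le> card ((Pi\<^sub>E (UNIV :: 'x set) (\<lambda>_. {..n})) \<times> {0::nat, 1})"
    using card_mono[OF finP Ksub] .
  also have "\<dots> = card (Pi\<^sub>E (UNIV :: 'x set) (\<lambda>_. {..n})) * card {0::nat, 1}" by (rule card_cartesian_product)
  also have "card (Pi\<^sub>E (UNIV :: 'x set) (\<lambda>_. {..n})) = (\<Prod>i\<in>(UNIV :: 'x set). card {..n})" by (rule card_PiE) simp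
  also have "(\<Prod>i\<in>(UNIV :: 'x set). card {..n}) = (n + 1) ^ card (UNIV :: 'x set)" by simp
  also have "card {0::nat, 1} = 2" by simp
  finally have cKn: "card K \<le> (n + 1) ^ card (UNIV :: 'x set) * 2" .
  have "real (card K) \<le> real ((n + 1) ^ card (UNIV :: 'x set) * 2)" using cKn by (rule of_nat_mono)
  also have "real ((n + 1) ^ card (UNIV :: 'x set) * 2) = 2 * (real n + 1) ^ card (UNIV :: 'x set)" by (simp add: add.commute)
  finally have cK: "real (card K) \<le> 2 * (real n + 1) ^ card (UNIV :: 'x set)" .
  have cKpos: "0 < real (card K)" using finK Kne by (simp add: card_gt_0_iff)
  define g where "g k = (\<Sum>x\<in>{x. x \<in> A \<and> \<kappa> x = k}. p x)" for k
  have sg: "(\<Sum>k\<in>K. g k) = M" unfolding g_def K_def using sum.image_gen[OF finA, of p \<kappa>] sp by simp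
  have "\<exists>k\<in>K. M / real (card K) \<le> g k"
  proof (rule ccontr)
    assume "\<not> ?thesis"
    hence lt: "\<forall>k\<in>K. g k < M / real (card K)" by auto
    have "(\<Sum>k\<in>K. g k) < (\<Sum>k\<in>K. M / real (card K))" by (rule sum_strict_mono[OF finK Kne]) (use lt in auto)
    also have "\<dots> = M" using cKpos by simp
    finally show False using sg by simp
  qed
  then obtain k where kK: "k \<in> K" and gk: "M / real (card K) \<le> g k" by blast
  obtain xs0 i0 where x0: "(xs0, i0) \<in> A" and kd: "k = \<kappa> (xs0, i0)" using kK unfolding K_def by auto
  have "M / (2 * (real n + 1) ^ card (UNIV :: 'x set)) \<le> M / real (card K)"
    using cK cKpos M by (intro divide_left_mono) auto
  also have "\<dots> \<le> g k" by (rule gk)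
  finally show ?thesis using x0 unfolding g_def kd \<kappa>_def by auto
qed

theorem lemma1:
  fixes W :: "'x::finite \<Rightarrow> complex mat" and d n M :: nat and r :: real
  assumes "is_cq_channel d W"
    and "M \<ge> 1"
    and "cq_capacity d 0 W < ereal r" and "ereal r < cq_capacity d 1 W"
  shows "eps_NS (real M) ({xs. length xs = n} \<times> {0, 1}) (tensor_channel_I2 W) (d ^ n * 2)
     \<ge> (INF T \<in> types_n n. SUP (\<sigma>, s) \<in> density_ops d \<times> {0..}.
           (1/2) * (real n + 1) powr (- real (card (UNIV :: 'x set))) *
             Re (mtrace (mat_wedge (d ^ n) (W_type_tensor n W T)
                  ((complex_of_real (real M * s)) \<cdot>\<^sub>m kron_list (replicate n \<sigma>)))) - s)"
proof -
  note chan = assms(1)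
  define A where "A = ({xs. length xs = n} \<times> {0, 1} :: ('x list \<times> nat) set)"
  define \<gamma> where "\<gamma> = (1/2) * (real n + 1) powr (- real (card (UNIV :: 'x set)))"
  define dm where "dm = density_ops d \<times> ({0..} :: real set)"
  define body where "body T = (\<lambda>(\<sigma>, s). \<gamma> * Re (mtrace (mat_wedge (d ^ n) (W_type_tensor n W T)
                  ((complex_of_real (real M * s)) \<cdot>\<^sub>m kron_list (replicate n \<sigma>)))) - s)" for T
  define f where "f T = (SUP z \<in> dm. body T z)" for T
  have rhs: "(INF T \<in> types_n n. SUP (\<sigma>, s) \<in> density_ops d \<times> {0..}.
           (1/2) * (real n + 1) powr (- real (card (UNIV :: 'x set))) *
             Re (mtrace (mat_wedge (d ^ n) (W_type_tensor n W T)
                  ((complex_of_real (real M * s)) \<cdot>\<^sub>m kron_list (replicate n \<sigma>)))) - s) = (INF T \<in> types_n n. f T)"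
    unfolding f_def body_def dm_def \<gamma>_def ..
  have Mpos: "0 < real M" using assms(2) by simp
  have p1: "(real n + 1) powr (- real (card (UNIV :: 'x set))) = inverse ((real n + 1) powr real (card (UNIV :: 'x set)))"
    by (rule powr_minus)
  have p2: "(real n + 1) powr real (card (UNIV :: 'x set)) = (real n + 1) ^ card (UNIV :: 'x set)"
    by (rule powr_realpow) simp
  have gam: "\<gamma> = 1 / (2 * (real n + 1) ^ card (UNIV :: 'x set))"
    unfolding \<gamma>_def p1 p2 by (simp add: inverse_eq_divide)
  have gam0: "0 \<le> \<gamma>" unfolding gam by simp
  have dne: "density_ops d \<noteq> {}" using chan unfolding is_cq_channel_def by blast
  have dmne: "dm \<noteq> {}" unfolding dm_def using dne by auto
  have finA: "finite A"
  proof -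
    have "{xs :: 'x list. length xs = n} = {xs. set xs \<subseteq> UNIV \<and> length xs = n}" by simp
    hence "finite {xs :: 'x list. length xs = n}" using finite_lists_length_eq[OF finite_UNIV, of n] by simp
    thus ?thesis unfolding A_def by simp
  qed
  have Ane: "A \<noteq> {}" unfolding A_def by (auto intro!: exI[of _ "replicate n undefined"])
  define H where "H h = (SUP z \<in> dm. (\<lambda>(\<sigma>, s). \<gamma> * Re (mtrace (mat_wedge (d ^ n)
       (kron_list (map W (SOME xs. length xs = n \<and> (\<forall>x. real (count_list xs x) = h x))))
       ((complex_of_real (real M * s)) \<cdot>\<^sub>m kron_list (replicate n \<sigma>)))) - s) z)" for h :: "'x \<Rightarrow> real"
  have fH: "f T = H (\<lambda>x. real n * T x)" for T unfolding f_def H_def body_def W_type_tensor_def ..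
  have sub: "(\<lambda>T x. real n * T x) ` types_n n \<subseteq> Pi\<^sub>E UNIV (\<lambda>_. real ` {..n})"
  proof
    fix h assume "h \<in> (\<lambda>T x. real n * T x) ` types_n n"
    then obtain T where T: "T \<in> types_n n" and h: "h = (\<lambda>x. real n * T x)" by blast
    have Tp: "\<forall>x. T x \<ge> 0" "(\<Sum>x\<in>UNIV. T x) = 1" using T unfolding types_n_def prob_dists_def by auto
    have "h x \<in> real ` {..n}" for x
    proof -
      obtain k :: nat where k: "real n * T x = real k" using T unfolding types_n_def by blast
      have "T x \<le> (\<Sum>x\<in>UNIV. T x)" by (rule member_le_sum) (use Tp in auto)
      hence "T x \<le> 1" using Tp by simp
      hence "real n * T x \<le> real n" by (simp add: mult_left_le)
      hence "k \<le> n" using k by simp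
      thus ?thesis unfolding h using k by auto
    qed
    thus "h \<in> Pi\<^sub>E UNIV (\<lambda>_. real ` {..n})" by (auto simp: PiE_UNIV_domain)
  qed
  have "f ` types_n n = H ` ((\<lambda>T x. real n * T x) ` types_n n)" unfolding image_image fH ..
  also have "\<dots> \<subseteq> H ` (Pi\<^sub>E UNIV (\<lambda>_. real ` {..n}))" using sub by (rule image_mono)
  finally have "finite (f ` types_n n)" by (rule finite_subset) (simp add: finite_PiE)
  hence bdd: "bdd_below (f ` types_n n)" by (rule bdd_below_finite)
  define S where "S = {(1 / real M) * (\<Sum>x\<in>A. Re (mtrace (\<Lambda> x * tensor_channel_I2 W x))) | \<Lambda> p.
       mat (d ^ n * 2) (d ^ n * 2) (\<lambda>ij. \<Sum>x\<in>A. \<Lambda> x $$ ij) = 1\<^sub>m (d ^ n * 2) \<and>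
       (\<forall>x\<in>A. p x \<ge> 0 \<and> loewner_le (d ^ n * 2) (0\<^sub>m (d ^ n * 2) (d ^ n * 2)) (\<Lambda> x)
               \<and> loewner_le (d ^ n * 2) (\<Lambda> x) (complex_of_real (p x) \<cdot>\<^sub>m 1\<^sub>m (d ^ n * 2))) \<and>
       (\<Sum>x\<in>A. p x) = real M}"
  have "\<exists>v. v \<in> S" unfolding S_def by (rule S_nonempty[OF finA Ane]) (use assms(2) in simp)
  hence Sne: "S \<noteq> {}" by blast
  have Sle: "v \<le> 1 - (INF T \<in> types_n n. f T)" if v: "v \<in> S" for v
  proof -
    obtain \<Lambda> p where vd: "v = (1 / real M) * (\<Sum>x\<in>A. Re (mtrace (\<Lambda> x * tensor_channel_I2 W x)))"
      and sum1: "mat (d ^ n * 2) (d ^ n * 2) (\<lambda>ij. \<Sum>x\<in>A. \<Lambda> x $$ ij) = 1\<^sub>m (d ^ n * 2)"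
      and lo: "\<forall>x\<in>A. p x \<ge> 0 \<and> loewner_le (d ^ n * 2) (0\<^sub>m (d ^ n * 2) (d ^ n * 2)) (\<Lambda> x)
               \<and> loewner_le (d ^ n * 2) (\<Lambda> x) (complex_of_real (p x) \<cdot>\<^sub>m 1\<^sub>m (d ^ n * 2))"
      and sp: "(\<Sum>x\<in>A. p x) = real M"
      using v unfolding S_def by blast
    have p0: "\<forall>x\<in>A. p x \<ge> 0" using lo by blast
    obtain xs0 i0 where x0: "(xs0, i0) \<in> A"
      and QC0: "real M / (2 * (real n + 1) ^ card (UNIV :: 'x set)) \<le>
         (\<Sum>x\<in>{x\<in>A. (count_list (fst x), snd x) = (count_list xs0, i0)}. p x)"
      using class_select[OF A_def p0 sp Mpos] by blast
    define C where "C = {x\<in>A. (count_list (fst x), snd x) = (count_list xs0, i0)}"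
    have QC: "real M * \<gamma> \<le> (\<Sum>x\<in>C. p x)" using QC0 unfolding C_def gam by simp
    have lx0: "length xs0 = n" and i0: "i0 < 2" using x0 unfolding A_def by auto
    define c0 where "c0 = count_list xs0"
    define T0 where "T0 = (if n = 0 then (\<lambda>x::'x. 1 / real (card (UNIV :: 'x set))) else (\<lambda>x. real (c0 x) / real n))"
    have cpos: "0 < card (UNIV :: 'x set)" by (simp add: card_gt_0_iff)
    have T0t: "T0 \<in> types_n n"
    proof (cases "n = 0")
      case True
      hence "T0 = (\<lambda>x::'x. 1 / real (card (UNIV :: 'x set)))" unfolding T0_def by simp
      thus ?thesis unfolding types_n_def prob_dists_def using True cpos by auto
    next
      case False
      hence T0e: "T0 = (\<lambda>x. real (c0 x) / real n)" unfolding T0_def by simp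
      have "(\<Sum>x\<in>UNIV. real (c0 x)) = real n"
        unfolding c0_def using sum_count_set[of xs0 UNIV] lx0 by (simp flip: of_nat_sum)
      hence "(\<Sum>x\<in>UNIV. T0 x) = 1" unfolding T0e using False by (simp add: sum_divide_distrib[symmetric])
      moreover have "\<forall>x. \<exists>k::nat. real n * T0 x = real k" unfolding T0e using False by auto
      ultimately show ?thesis unfolding types_n_def prob_dists_def T0e by auto
    qed
    define ys0 where "ys0 = (SOME xs. length xs = n \<and> (\<forall>x. real (count_list xs x) = real n * T0 x))"
    have ex: "length xs0 = n \<and> (\<forall>x. real (count_list xs0 x) = real n * T0 x)"
    proof (cases "n = 0")
      case True thus ?thesis using lx0 by simp
    next
      case False thus ?thesis using lx0 unfolding T0_def c0_def by simp
    qed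
    have ys0: "length ys0 = n \<and> (\<forall>x. real (count_list ys0 x) = real n * T0 x)"
      unfolding ys0_def by (rule someI[of _ xs0], rule ex)
    have ly: "length ys0 = n" using ys0 by simp
    have cys: "count_list ys0 = c0"
    proof
      fix x
      show "count_list ys0 x = c0 x"
      proof (cases "n = 0")
        case True thus ?thesis using ly lx0 unfolding c0_def by simp
      next
        case False
        hence "real (count_list ys0 x) = real (c0 x)" using ys0 unfolding T0_def by simp
        thus ?thesis by simp
      qed
    qed
    have WT: "W_type_tensor n W T0 = kron_list (map W ys0)" unfolding W_type_tensor_def ys0_def ..
    have CA: "C \<subseteq> A" unfolding C_def by auto
    have Ccl: "i = i0 \<and> mset ys0 = mset xs" if "(xs, i) \<in> C" for xs i
    proof -
      have "count_list xs = c0" "i = i0" using that unfolding C_def c0_def by auto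
      hence "mset ys0 = mset xs" using cys by (intro multiset_eqI) (simp add: count_mset)
      thus ?thesis using \<open>i = i0\<close> by simp
    qed
    have Ai: "length xs = n \<and> i < 2" if "(xs, i) \<in> A" for xs i using that unfolding A_def by auto
    have bodyle: "body T0 z \<le> 1 - v" if z: "z \<in> dm" for z
    proof -
      obtain \<sigma> s where zd: "z = (\<sigma>, s)" and sig: "\<sigma> \<in> density_ops d" and s: "0 \<le> s" using z unfolding dm_def by auto
      have "v \<le> 1 - (\<gamma> * Re (mtrace (mat_wedge (d^n) (kron_list (map W ys0)) (complex_of_real (real M * s) \<cdot>\<^sub>m kron_list (replicate n \<sigma>)))) - s)"
        unfolding vd by (rule core[OF chan Mpos Ai sum1 lo sp finA CA Ccl ly i0 QC gam0 sig s])
      thus ?thesis unfolding body_def zd WT by simp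
    qed
    have "f T0 \<le> 1 - v" unfolding f_def by (rule cSUP_least[OF dmne bodyle])
    moreover have "(INF T \<in> types_n n. f T) \<le> f T0" by (rule cINF_lower[OF bdd T0t])
    ultimately show ?thesis by simp
  qed
  have "Sup S \<le> 1 - (INF T \<in> types_n n. f T)" by (rule cSup_least[OF Sne Sle])
  moreover have "eps_NS (real M) ({xs. length xs = n} \<times> {0, 1}) (tensor_channel_I2 W) (d ^ n * 2) = 1 - Sup S"
    unfolding eps_NS_def S_def A_def ..
  ultimately show ?thesis unfolding rhs by simp
qed

end
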